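(* Let $A\in\mathbb{R}^{n\times n}$ be Metzler, $J\in\mathbb{R}^{n\times n}$ be nonnegative and $\bar T>0$. The following statements are equivalent: (a) The impulsive system is asymptotically stable under constant dwell-time $\bar T$ (i.e. when $T_k=\bar T$ for all $k$). (b) There exist $\lambda\in\mathbb{R}^n_{>0}$ and $\mu\in\mathbb{R}^n_{>0}$ such that, with $V(x)=\lambda^\top x$, one has $V(Je^{A\bar T}x)-V(x)\le-\mu^\top x$ for all $x\in\mathbb{R}^n_{\ge0}$ (i.e. $V(x(t_{k+1}^+))-V(x(t_k^+))\le -\mu^\top x(t_k^+)$ along all trajectories). (c) There exists $\lambda\in\mathbb{R}^n_{>0}$ such that $\lambda^\top(Je^{A\bar T}-I_n)<0$; equivalently, $Je^{A\bar T}$ is Schur stable. (d) There exists $\lambda\in\mathbb{R}^n_{>0}$ such that $(Je^{A\bar T}-I_n)\lambda<0$; equivalently, $e^{A^\top\bar T}J^\top$ is Schur stable. (e) There exist a differentiable function $\zeta:[0,\bar T]\to\mathbb{R}^n$ with $\zeta(\bar T)\in\mathbb{R}^n_{>0}$ and a scalar $\varepsilon>0$ such that $\zeta(\tau)^\top A-\dot\zeta(\tau)^\top\le 0$ for all $\tau\in[0,\bar T]$ and $\zeta(\bar T)^\top J-\zeta(0)^\top+\varepsilon\mathbf{1}_n^\top\le0$. (f) There exist a differentiable function $\xi:[0,\bar T]\to\mathbb{R}^n$ with $\xi(0)\in\mathbb{R}^n_{>0}$ and a scalar $\varepsilon>0$ such that $\xi(\tau)^\top A+\dot\xi(\tau)^\top\le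 0$ for all $\tau\in[0,\bar T]$ and $\xi(0)^\top J-\xi(\bar T)^\top+\varepsilon\mathbf{1}_n^\top\le0$.
   Context: Consider the linear impulsive system $\dot x(t)=Ax(t)$ for $t\neq t_k$, $x(t_k^+)=Jx(t_k)$, $x(t_0)=x_0$, where $x(t)\in\mathbb{R}^n$, $x(t^+):=\lim_{s\downarrow t}x(s)$, and the impulse times $\{t_k\}_{k\in\mathbb{N}}$ are strictly increasing with $t_k\to\infty$; $T_k:=t_{k+1}-t_k$. A matrix is Metzler if its off-diagonal entries are nonnegative, nonnegative if all entries are nonnegative, and Schur stable if its spectral radius is $<1$. Vector inequalities are componentwise; $\mathbf{1}_n$ is the $n$-vector of ones. The system is asymptotically stable under a given dwell-time constraint if its zero solution is globally asymptotically stable for every impulse sequence whose dwell-times satisfy the constraint. *)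

theory Defs
  imports "HOL-Analysis.Analysis"
begin

fun matpow :: "real^'n^'n \<Rightarrow> nat \<Rightarrow> real^'n^'n" where
  "matpow M 0 = mat 1"
| "matpow M (Suc k) = M ** matpow M k"

definition mexp :: "real^'n^'n \<Rightarrow> real^'n^'n" where
  "mexp M = (\<Sum>k. (1 / fact k) *\<^sub>R matpow M k)"

definition metzler :: "real^'n^'n \<Rightarrow> bool" where
  "metzler M \<longleftrightarrow> (\<forall>i j. i \<noteq> j \<longrightarrow> 0 \<le> M $ i $ j)"

definition nonneg_mat :: "real^'n^'n \<Rightarrow> bool" where
  "nonneg_mat M \<longleftrightarrow> (\<forall>i j. 0 \<le> M $ i $ j)"

definition pos_vec :: "real^'n \<Rightarrow> bool" where
  "pos_vec v \<longleftrightarrow> (\<forall>i. 0 < v $ i)"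

definition nonneg_vec :: "real^'n \<Rightarrow> bool" where
  "nonneg_vec v \<longleftrightarrow> (\<forall>i. 0 \<le> v $ i)"

definition neg_vec :: "real^'n \<Rightarrow> bool" where
  "neg_vec v \<longleftrightarrow> (\<forall>i. v $ i < 0)"

definition nonpos_vec :: "real^'n \<Rightarrow> bool" where
  "nonpos_vec v \<longleftrightarrow> (\<forall>i. v $ i \<le> 0)"

definition cmat :: "real^'n^'n \<Rightarrow> complex^'n^'n" where
  "cmat M = (\<chi> i j. complex_of_real (M $ i $ j))"

definition schur_stable :: "real^'n^'n \<Rightarrow> bool" where
  "schur_stable M \<longleftrightarrow>
     (\<forall>c::complex. (\<exists>v::complex^'n. v \<noteq> 0 \<and> cmat M *v v = c *s v) \<longrightarrow> cmod c < 1)"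

text \<open>The trajectory is left-continuous: on each (t_k, t_{k+1}] it is continuous, solves the ODE
  in the interior, and its right limit at t_k equals J x(t_k).\<close>
definition impulsive_solution ::
  "real^'n^'n \<Rightarrow> real^'n^'n \<Rightarrow> real \<Rightarrow> real \<Rightarrow> real^'n \<Rightarrow> (real \<Rightarrow> real^'n) \<Rightarrow> bool" where
  "impulsive_solution A J T t0 x0 x \<longleftrightarrow>
     x t0 = x0 \<and>
     (\<forall>k::nat.
        let tk = t0 + real k * T; tk1 = t0 + real (Suc k) * T in
        continuous_on {tk<..tk1} x \<and>
        (\<forall>t\<in>{tk<..<tk1}. (x has_vector_derivative (A *v x t)) (at t)) \<and>
        (x \<longlongrightarrow> J *v x tk) (at_right tk))"

definition gas_const_dwell :: "real^'n^'n \<Rightarrow> real^'n^'n \<Rightarrow> real \<Rightarrow> bool" where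
  "gas_const_dwell A J T \<longleftrightarrow>
     (\<forall>t0.
        (\<forall>\<epsilon>>0. \<exists>\<delta>>0. \<forall>x0 x. impulsive_solution A J T t0 x0 x \<and> norm x0 < \<delta> \<longrightarrow>
                   (\<forall>t\<ge>t0. norm (x t) < \<epsilon>)) \<and>
        (\<forall>x0 x. impulsive_solution A J T t0 x0 x \<longrightarrow> (x \<longlongrightarrow> 0) at_top))"

end

theory Submission
  imports Defs
begin

typedef (overloaded) ('n::finite) mx = "UNIV :: ((real^'n) \<Rightarrow>\<^sub>L (real^'n)) set" by auto
setup_lifting type_definition_mx

instantiation mx :: (finite) real_normed_vector
begin
lift_definition norm_mx :: "'a mx \<Rightarrow> real" is norm .
lift_definition minus_mx :: "'a mx \<Rightarrow> 'a mx \<Rightarrow> 'a mx" is "(-)" .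
lift_definition plus_mx :: "'a mx \<Rightarrow> 'a mx \<Rightarrow> 'a mx" is "(+)" .
lift_definition uminus_mx :: "'a mx \<Rightarrow> 'a mx" is "uminus" .
lift_definition zero_mx :: "'a mx" is "0" .
lift_definition scaleR_mx :: "real \<Rightarrow> 'a mx \<Rightarrow> 'a mx" is "scaleR" .
definition dist_mx :: "'a mx \<Rightarrow> 'a mx \<Rightarrow> real" where "dist_mx a b = norm (a - b)"
definition sgn_mx :: "'a mx \<Rightarrow> 'a mx" where "sgn_mx x = scaleR (inverse (norm x)) x"
definition uniformity_mx :: "('a mx \<times> 'a mx) filter" where
  "uniformity_mx = (INF e\<in>{0 <..}. principal {(x, y). dist x y < e})"
definition open_mx :: "'a mx set \<Rightarrow> bool" where
  "open_mx S = (\<forall>x\<in>S. \<forall>\<^sub>F (x', y) in uniformity. x' = x \<longrightarrow> y \<in> S)"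
instance
  apply standard
  unfolding dist_mx_def open_mx_def sgn_mx_def uniformity_mx_def
  apply (rule refl | (transfer, force simp: norm_triangle_ineq algebra_simps))+
  done
end

instantiation mx :: (finite) real_normed_algebra_1
begin
lift_definition times_mx :: "'a mx \<Rightarrow> 'a mx \<Rightarrow> 'a mx" is "blinfun_compose" .
lift_definition one_mx :: "'a mx" is "id_blinfun" .
instance
proof standard
  show "(0::'a mx) \<noteq> 1"
  proof transfer
    have "blinfun_apply (0::(real^'a) \<Rightarrow>\<^sub>L (real^'a)) 1 \<noteq> blinfun_apply id_blinfun 1" by simp
    then show "(0::(real^'a) \<Rightarrow>\<^sub>L (real^'a)) \<noteq> id_blinfun" by metis
  qed
  show "norm (1::'a mx) = 1" by transfer simp
  fix x y :: "'a mx"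
  show "norm (x * y) \<le> norm x * norm y" by transfer (rule norm_blinfun_compose)
qed (transfer, rule blinfun_eqI, simp add: blinfun.bilinear_simps)+
end

lemma Cauchy_Rep_mx: "Cauchy X \<Longrightarrow> Cauchy (\<lambda>n. Rep_mx (X n))"
  unfolding Cauchy_def dist_norm by (simp add: norm_mx.rep_eq minus_mx.rep_eq)

instance mx :: (finite) banach
proof
  fix X :: "nat \<Rightarrow> 'a mx" assume "Cauchy X"
  then obtain l where l: "(\<lambda>n. Rep_mx (X n)) \<longlonglongrightarrow> l"
    using Cauchy_Rep_mx convergent_def Cauchy_convergent by blast
  have "X \<longlonglongrightarrow> Abs_mx l"
    using l unfolding tendsto_iff dist_norm
    by (simp add: norm_mx.rep_eq minus_mx.rep_eq Abs_mx_inverse)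
  then show "convergent X" by (auto simp: convergent_def)
qed

definition app :: "'n::finite mx \<Rightarrow> real^'n \<Rightarrow> real^'n" where
  "app X v = blinfun_apply (Rep_mx X) v"

lemma app_mult: "app (X * Y) v = app X (app Y v)"
  by (simp add: app_def times_mx.rep_eq)
lemma app_one[simp]: "app 1 v = v"
  by (simp add: app_def one_mx.rep_eq)
lemma app_add: "app (X + Y) v = app X v + app Y v"
  by (simp add: app_def plus_mx.rep_eq blinfun.bilinear_simps)
lemma app_scaleR: "app (c *\<^sub>R X) v = c *\<^sub>R app X v"
  by (simp add: app_def scaleR_mx.rep_eq blinfun.bilinear_simps)
lemma app_zero[simp]: "app 0 v = 0"
  by (simp add: app_def zero_mx.rep_eq)
lemma norm_app: "norm (app X v) \<le> norm X * norm v"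
  by (simp add: app_def norm_mx.rep_eq norm_blinfun)
lemma mx_eqI: "(\<And>v. app X v = app Y v) \<Longrightarrow> X = Y"
  by (metis Rep_mx_inject app_def blinfun_eqI)

lemma bounded_bilinear_app: "bounded_bilinear app"
proof
  fix a a' :: "'a mx" and b b' :: "real^'a" and r :: real
  show "app (a + a') b = app a b + app a' b" by (rule app_add)
  show "app a (b + b') = app a b + app a b'" by (simp add: app_def blinfun.bilinear_simps)
  show "app (r *\<^sub>R a) b = r *\<^sub>R app a b" by (rule app_scaleR)
  show "app a (r *\<^sub>R b) = r *\<^sub>R app a b" by (simp add: app_def blinfun.bilinear_simps)
  show "\<exists>K. \<forall>a b. norm (app a b) \<le> norm a * norm b * K"
    by (rule exI[of _ 1]) (simp add: norm_app)
qed

lemma bounded_linear_app_left: "bounded_linear (\<lambda>X. app X v)"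
  using bounded_bilinear.bounded_linear_left[OF bounded_bilinear_app] .
lemma bounded_linear_app_right: "bounded_linear (\<lambda>v. app X v)"
  using bounded_bilinear.bounded_linear_right[OF bounded_bilinear_app] .

lemma bl_mv: "bounded_linear (\<lambda>v. (A::real^'n^'n) *v v)"
  by (simp add: linear_conv_bounded_linear)

definition L :: "real^'n^'n \<Rightarrow> 'n::finite mx" where
  "L A = Abs_mx (Blinfun (\<lambda>v. A *v v))"

lemma app_L[simp]: "app (L A) v = A *v v"
  by (simp add: app_def L_def Abs_mx_inverse bounded_linear_Blinfun_apply[OF bl_mv])

definition mat_of :: "'n::finite mx \<Rightarrow> real^'n^'n" where
  "mat_of X = matrix (app X)"

lemma linear_app: "linear (app X)"
  using bounded_linear_app_right bounded_linear.linear by blast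

lemma mat_of_mv[simp]: "mat_of X *v v = app X v"
  unfolding mat_of_def by (rule matrix_works) (simp add: linear_app linear_matrix_vector_mul_eq)

lemma L_mat_of[simp]: "L (mat_of X) = X"
  by (rule mx_eqI) simp
lemma mat_of_L[simp]: "mat_of (L A) = A"
  unfolding mat_of_def by (simp add: app_L[abs_def])

lemma L_mult: "L (A ** B) = L A * L B"
  by (rule mx_eqI) (simp add: app_mult matrix_vector_mul_assoc)
lemma L_one: "L (mat 1) = 1"
  by (rule mx_eqI) simp
lemma L_add: "L (A + B) = L A + L B"
  by (rule mx_eqI) (simp add: app_add matrix_vector_mult_add_rdistrib)
lemma L_scaleR: "L (c *\<^sub>R A) = c *\<^sub>R L A"
  by (rule mx_eqI) (simp add: app_scaleR scaleR_matrix_vector_assoc)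
lemma L_matpow: "L (matpow M k) = (L M) ^ k"
  by (induction k) (simp_all add: L_one L_mult)

lemma L_inj: "L A = L B \<Longrightarrow> A = B"
  by (metis mat_of_L)

lemma linear_L: "linear (L :: real^'n^'n \<Rightarrow> 'n::finite mx)"
  by (rule linearI) (simp_all add: L_add L_scaleR)
lemma bounded_linear_L: "bounded_linear (L :: real^'n^'n \<Rightarrow> 'n::finite mx)"
  using linear_L by (simp add: linear_conv_bounded_linear)

lemma mat_of_entry: "mat_of X $ i $ j = app X (axis j 1) $ i"
  unfolding mat_of_def matrix_def by simp

lemma mat_of_add: "mat_of (X + Y) = mat_of X + mat_of Y"
  by (metis L_add L_mat_of mat_of_L)
lemma mat_of_scaleR: "mat_of (c *\<^sub>R X) = c *\<^sub>R mat_of X"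
  by (metis L_scaleR L_mat_of mat_of_L)
lemma mat_of_mult: "mat_of (X * Y) = mat_of X ** mat_of Y"
  by (metis L_mult L_mat_of mat_of_L)
lemma mat_of_one: "mat_of 1 = mat 1"
  by (metis L_one mat_of_L)

lemma bounded_linear_mat_of: "bounded_linear (mat_of :: 'n::finite mx \<Rightarrow> real^'n^'n)"
proof (rule bounded_linear_intro[where K="real CARD('n) * real CARD('n)"])
  fix X Y :: "'n mx" and r :: real
  show "mat_of (X + Y) = mat_of X + mat_of Y" by (rule mat_of_add)
  show "mat_of (r *\<^sub>R X) = r *\<^sub>R mat_of X" by (rule mat_of_scaleR)
  have e: "\<bar>mat_of X $ i $ j\<bar> \<le> norm X" for i j
  proof -
    have "\<bar>mat_of X $ i $ j\<bar> \<le> norm (app X (axis j 1))"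
      unfolding mat_of_entry by (rule component_le_norm_cart)
    also have "\<dots> \<le> norm X * norm (axis j (1::real))" by (rule norm_app)
    finally show ?thesis by simp
  qed
  have "norm (mat_of X) \<le> (\<Sum>i\<in>UNIV. norm (mat_of X $ i))"
    unfolding norm_vec_def by (rule L2_set_le_sum) simp
  also have "\<dots> \<le> (\<Sum>i\<in>(UNIV::'n set). \<Sum>j\<in>(UNIV::'n set). \<bar>mat_of X $ i $ j\<bar>)"
    by (rule sum_mono) (rule norm_le_l1_cart)
  also have "\<dots> \<le> (\<Sum>i\<in>(UNIV::'n set). \<Sum>j\<in>(UNIV::'n set). norm X)"
    by (intro sum_mono e)
  also have "\<dots> = norm X * (real CARD('n) * real CARD('n))" by simp
  finally show "norm (mat_of X) \<le> norm X * (real CARD('n) * real CARD('n))" .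
qed

lemma mexp_sums: "(\<lambda>k. (1 / fact k) *\<^sub>R matpow M k) sums mat_of (exp (L M))"
proof -
  have "(\<lambda>k. mat_of ((L M)^k /\<^sub>R fact k)) sums mat_of (exp (L M))"
    by (rule bounded_linear.sums[OF bounded_linear_mat_of exp_converges])
  moreover have "mat_of ((L M)^k /\<^sub>R fact k) = (1 / fact k) *\<^sub>R matpow M k" for k
    by (simp add: mat_of_scaleR L_matpow[symmetric] divide_inverse_commute)
  ultimately show ?thesis by simp
qed

lemma mexp_eq: "mexp M = mat_of (exp (L M))"
  unfolding mexp_def using mexp_sums sums_unique by metis

lemma mexp_sums': "(\<lambda>k. (1 / fact k) *\<^sub>R matpow M k) sums mexp M"
  using mexp_sums mexp_eq by metis

lemma mexp_scale: "mexp (t *\<^sub>R A) = mat_of (exp (t *\<^sub>R L A))"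
  by (simp add: mexp_eq L_scaleR)

lemma L_mexp: "L (mexp (t *\<^sub>R A)) = exp (t *\<^sub>R L A)"
  by (simp add: mexp_scale)

lemma mexp_mv: "mexp (t *\<^sub>R A) *v v = app (exp (t *\<^sub>R L A)) v"
  by (simp add: mexp_scale)

lemma exp_scaleR_commute: "exp (t *\<^sub>R X) * X = X * exp (t *\<^sub>R (X::'a::{real_normed_algebra_1,banach}))"
proof (cases "t = 0")
  case True then show ?thesis by simp
next
  case False
  have "exp (t *\<^sub>R X) * (t *\<^sub>R X) = (t *\<^sub>R X) * exp (t *\<^sub>R X)" by (rule exp_times_arg_commute)
  then have "t *\<^sub>R (exp (t *\<^sub>R X) * X) = t *\<^sub>R (X * exp (t *\<^sub>R X))" by simp
  then show ?thesis using False by simp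
qed

lemma exp_scaleR_add: "exp ((s + t) *\<^sub>R X) = exp (s *\<^sub>R X) * exp (t *\<^sub>R (X::'a::{real_normed_algebra_1,banach}))"
proof -
  have "(s *\<^sub>R X) * (t *\<^sub>R X) = (t *\<^sub>R X) * (s *\<^sub>R X)" by (simp add: mult.commute)
  then show ?thesis by (simp add: scaleR_add_left exp_add_commuting)
qed

lemma exp_scaleR_inv: "exp (t *\<^sub>R X) * exp ((-t) *\<^sub>R (X::'a::{real_normed_algebra_1,banach})) = 1"
  using exp_scaleR_add[of t "-t" X] by simp
lemma exp_scaleR_inv': "exp ((-t) *\<^sub>R X) * exp (t *\<^sub>R (X::'a::{real_normed_algebra_1,banach})) = 1"
  using exp_scaleR_add[of "-t" t X] by simp

lemma mexp_deriv:
  "((\<lambda>t. mexp (t *\<^sub>R A)) has_vector_derivative (mexp (t *\<^sub>R A) ** A)) (at t within S)"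
proof -
  have "((\<lambda>t. mat_of (exp (t *\<^sub>R L A))) has_vector_derivative mat_of (exp (t *\<^sub>R L A) * L A)) (at t within S)"
    by (rule bounded_linear.has_vector_derivative[OF bounded_linear_mat_of exp_scaleR_has_vector_derivative_right])
  then show ?thesis by (simp add: mexp_scale mat_of_mult)
qed

lemma mexp_commute: "mexp (t *\<^sub>R A) ** A = A ** mexp (t *\<^sub>R A)"
  by (rule L_inj) (simp add: L_mult L_mexp exp_scaleR_commute)

lemma mexp_add: "mexp ((s + t) *\<^sub>R A) = mexp (s *\<^sub>R A) ** mexp (t *\<^sub>R A)"
  by (simp add: mexp_scale exp_scaleR_add mat_of_mult)

lemma mexp_zero: "mexp 0 = (mat 1 :: real^'n::finite^'n)"
  using mexp_scale[of 0 "mat 1 :: real^'n^'n"] by (simp add: mat_of_one)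

lemma mexp_inv: "mexp (t *\<^sub>R A) ** mexp ((-t) *\<^sub>R A) = mat 1"
  using mexp_add[of t "-t" A] by (simp add: mexp_zero)
lemma mexp_inv': "mexp ((-t) *\<^sub>R A) ** mexp (t *\<^sub>R A) = mat 1"
  using mexp_add[of "-t" t A] by (simp add: mexp_zero)

lemma matpow_nonneg: "nonneg_mat M \<Longrightarrow> nonneg_mat (matpow M k)"
  by (induction k) (auto simp: nonneg_mat_def mat_def matrix_matrix_mult_def intro!: sum_nonneg)

lemma matpow_Suc': "matpow M (Suc k) = matpow M k ** M"
proof -
  have "L (matpow M (Suc k)) = L (matpow M k ** M)"
    unfolding L_mult L_matpow by (rule power_Suc2)
  then show ?thesis by (rule L_inj)
qed

lemma mexp_nonneg_pos: "nonneg_mat B \<Longrightarrow> nonneg_mat (mexp B)"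
proof -
  assume B: "nonneg_mat B"
  show ?thesis unfolding nonneg_mat_def
  proof (intro allI)
    fix i j
    have bl: "bounded_linear (\<lambda>X::real^'a^'a. X $ i $ j)"
      using bounded_linear_compose[OF bounded_linear_vec_nth[of j] bounded_linear_vec_nth[of i]] by simp
    have s: "(\<lambda>k. ((1 / fact k) *\<^sub>R matpow B k) $ i $ j) sums (mexp B $ i $ j)"
      by (rule bounded_linear.sums[OF bl mexp_sums'])
    have "0 \<le> ((1 / fact k) *\<^sub>R matpow B k) $ i $ j" for k
      using matpow_nonneg[OF B, of k] unfolding nonneg_mat_def by simp
    then have "0 \<le> suminf (\<lambda>k. ((1 / fact k) *\<^sub>R matpow B k) $ i $ j)"
      by (intro suminf_nonneg sums_summable[OF s])
    then show "0 \<le> mexp B $ i $ j" using sums_unique[OF s] by simp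
  qed
qed

lemma metzler_mexp_nonneg:
  assumes "metzler A" "0 \<le> t"
  shows "nonneg_mat (mexp (t *\<^sub>R A))"
proof -
  define c where "c = (\<Sum>i\<in>UNIV. \<bar>A $ i $ i\<bar>)"
  define B where "B = A + c *\<^sub>R mat 1"
  have cge: "\<bar>A $ i $ i\<bar> \<le> c" for i
    unfolding c_def by (rule member_le_sum) auto
  have Bnn: "nonneg_mat B"
    unfolding nonneg_mat_def B_def
  proof (intro allI)
    fix i j show "0 \<le> (A + c *\<^sub>R mat 1) $ i $ j"
      using assms(1) cge[of i] by (cases "i = j") (auto simp: metzler_def mat_def)
  qed
  have tB: "nonneg_mat (t *\<^sub>R B)"
    using Bnn assms(2) by (simp add: nonneg_mat_def)
  have "t *\<^sub>R L A = t *\<^sub>R L B + of_real (- (t * c))"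
    by (simp add: B_def L_add L_scaleR L_one scaleR_add_right of_real_def)
  then have e1: "exp (t *\<^sub>R L A) = exp (t *\<^sub>R L B + of_real (- (t * c)))" by simp
  have comm: "(t *\<^sub>R L B) * of_real (- (t * c)) = of_real (- (t * c)) * (t *\<^sub>R L B)"
    by (simp add: of_real_def)
  have "exp (t *\<^sub>R L A) = exp (t *\<^sub>R L B) * exp (of_real (- (t * c)))"
    unfolding e1 by (rule exp_add_commuting[OF comm])
  also have "\<dots> = exp (- (t * c)) *\<^sub>R exp (t *\<^sub>R L B)"
    unfolding exp_of_real by (simp add: of_real_def)
  finally have "exp (t *\<^sub>R L A) = exp (- (t * c)) *\<^sub>R exp (t *\<^sub>R L B)" .
  then have "mexp (t *\<^sub>R A) = exp (- (t * c)) *\<^sub>R mexp (t *\<^sub>R B)"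
    by (simp add: mexp_scale mat_of_scaleR)
  then show ?thesis
    using mexp_nonneg_pos[OF tB] by (simp add: nonneg_mat_def mexp_scale)
qed

lemma transpose_add': "transpose (A + B) = transpose A + transpose (B::real^'n^'m)"
  by (simp add: transpose_def vec_eq_iff)
lemma transpose_scaleR': "transpose (c *\<^sub>R A) = c *\<^sub>R transpose (A::real^'n^'m)"
  by (simp add: transpose_def vec_eq_iff)

lemma bounded_linear_transpose: "bounded_linear (transpose :: real^'n^'m \<Rightarrow> real^'m^'n)"
proof -
  have "linear (transpose :: real^'n^'m \<Rightarrow> real^'m^'n)"
    by (rule linearI) (simp_all add: transpose_add' transpose_scaleR')
  then show ?thesis by (simp add: linear_conv_bounded_linear)
qed

lemma matpow_transpose: "matpow (transpose M) k = transpose (matpow M k)"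
proof (induction k)
  case 0 then show ?case by (simp add: transpose_mat)
next
  case (Suc k)
  have "matpow (transpose M) (Suc k) = transpose M ** transpose (matpow M k)" using Suc by simp
  also have "\<dots> = transpose (matpow M k ** M)" by (simp add: matrix_transpose_mul)
  also have "\<dots> = transpose (matpow M (Suc k))" by (simp only: matpow_Suc')
  finally show ?case .
qed

lemma mexp_transpose: "mexp (transpose M) = transpose (mexp M)"
proof -
  have "(\<lambda>k. transpose ((1 / fact k) *\<^sub>R matpow M k)) sums transpose (mexp M)"
    by (rule bounded_linear.sums[OF bounded_linear_transpose mexp_sums'])
  then have "(\<lambda>k. (1 / fact k) *\<^sub>R matpow (transpose M) k) sums transpose (mexp M)"
    by (simp add: transpose_scaleR' matpow_transpose)
  then show ?thesis using mexp_sums' sums_unique2 by blast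
qed

lemma vm_entry: "(lam v* X) $ j = (\<Sum>i\<in>UNIV. lam $ i * X $ i $ j)"
  by (simp add: vector_matrix_mult_def)
lemma mv_entry: "(X *v x) $ i = (\<Sum>j\<in>UNIV. X $ i $ j * x $ j)"
  by (simp add: matrix_vector_mult_def)

lemma cmat_mv_entry: "(cmat N *v v) $ i = (\<Sum>j\<in>UNIV. complex_of_real (N $ i $ j) * v $ j)"
  by (simp add: matrix_vector_mult_def cmat_def)

lemma schur_of_row:
  fixes N :: "real^'n::finite^'n"
  assumes N: "nonneg_mat N" and lam: "pos_vec lam" and neg: "neg_vec (lam v* (N - mat 1))"
  shows "schur_stable N"
  unfolding schur_stable_def
proof (intro allI impI)
  fix c :: complex
  assume "\<exists>v. v \<noteq> 0 \<and> cmat N *v v = c *s v"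
  then obtain v where v0: "v \<noteq> 0" and ev: "cmat N *v v = c *s v" by blast
  define a where "a = (\<lambda>i. cmod (v $ i))"
  have step1: "cmod c * a i \<le> (\<Sum>j\<in>UNIV. N $ i $ j * a j)" for i
  proof -
    have "cmod c * a i = cmod ((c *s v) $ i)" by (simp add: a_def norm_mult)
    also have "\<dots> = cmod (\<Sum>j\<in>UNIV. complex_of_real (N $ i $ j) * v $ j)"
      by (simp only: ev[symmetric] cmat_mv_entry)
    also have "\<dots> \<le> (\<Sum>j\<in>UNIV. cmod (complex_of_real (N $ i $ j) * v $ j))"
      by (rule norm_sum)
    also have "\<dots> = (\<Sum>j\<in>UNIV. N $ i $ j * a j)"
      using N by (simp add: a_def norm_mult nonneg_mat_def)
    finally show ?thesis .
  qed
  have rowneg: "(\<Sum>i\<in>UNIV. lam $ i * N $ i $ j) < lam $ j" for j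
  proof -
    have "(lam v* (N - mat 1)) $ j < 0" using neg by (simp add: neg_vec_def)
    moreover have "(lam v* (N - mat 1)) $ j = (\<Sum>i\<in>UNIV. lam $ i * N $ i $ j) - lam $ j"
      by (simp add: vector_matrix_mult_diff_rdistrib vm_entry)
    ultimately show ?thesis by simp
  qed
  obtain j0 where j0: "v $ j0 \<noteq> 0" using v0 by (metis vec_eq_iff zero_index)
  have apos: "0 < a j0" using j0 by (simp add: a_def)
  have anonneg: "0 \<le> a j" for j by (simp add: a_def)
  have lampos: "0 < lam $ i" for i using lam by (simp add: pos_vec_def)
  have "cmod c * (\<Sum>i\<in>UNIV. lam $ i * a i) = (\<Sum>i\<in>UNIV. lam $ i * (cmod c * a i))"
    by (simp add: sum_distrib_left algebra_simps)
  also have "\<dots> \<le> (\<Sum>i\<in>UNIV. lam $ i * (\<Sum>j\<in>UNIV. N $ i $ j * a j))"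
    by (intro sum_mono mult_left_mono step1) (simp add: less_imp_le lampos)
  also have "\<dots> = (\<Sum>j\<in>UNIV. (\<Sum>i\<in>UNIV. lam $ i * N $ i $ j) * a j)"
    by (simp only: sum_distrib_left sum_distrib_right mult.assoc) (rule sum.swap)
  also have "\<dots> < (\<Sum>j\<in>UNIV. lam $ j * a j)"
  proof (rule sum_strict_mono_ex1)
    show "\<forall>j\<in>UNIV. (\<Sum>i\<in>UNIV. lam $ i * N $ i $ j) * a j \<le> lam $ j * a j"
      using rowneg anonneg by (simp add: less_imp_le mult_right_mono)
    show "\<exists>j\<in>UNIV. (\<Sum>i\<in>UNIV. lam $ i * N $ i $ j) * a j < lam $ j * a j"
      using rowneg apos by (intro bexI[of _ j0]) (simp_all add: mult_strict_right_mono)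
  qed simp
  finally have lt: "cmod c * (\<Sum>i\<in>UNIV. lam $ i * a i) < (\<Sum>i\<in>UNIV. lam $ i * a i)" .
  have "0 < (\<Sum>i\<in>UNIV. lam $ i * a i)"
    using lampos anonneg apos
    by (intro sum_pos2[where i=j0]) (simp_all add: less_imp_le)
  then show "cmod c < 1" using lt by simp
qed

lemma nonneg_mv: "nonneg_mat N \<Longrightarrow> nonneg_vec x \<Longrightarrow> 0 \<le> (N *v x) $ i"
  unfolding mv_entry nonneg_mat_def nonneg_vec_def by (auto intro!: sum_nonneg)

lemma cmat_real_eig:
  fixes N :: "real^'n::finite^'n"
  assumes "N *v z = s *\<^sub>R z" "z \<noteq> 0" "schur_stable N"
  shows "\<bar>s\<bar> < 1"
proof -
  define v where "v = (\<chi> i. complex_of_real (z $ i))"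
  have "v \<noteq> 0" using assms(2) by (auto simp: v_def vec_eq_iff)
  moreover have "cmat N *v v = complex_of_real s *s v"
  proof -
    have "(cmat N *v v) $ i = (complex_of_real s *s v) $ i" for i
    proof -
      have "(cmat N *v v) $ i = complex_of_real ((N *v z) $ i)"
        by (simp add: matrix_vector_mult_def cmat_def v_def)
      then show ?thesis using assms(1) by (simp add: v_def)
    qed
    then show ?thesis by (simp add: vec_eq_iff)
  qed
  ultimately show ?thesis using assms(3) unfolding schur_stable_def by fastforce
qed

lemma pf_col:
  fixes N :: "real^'n::finite^'n"
  assumes N: "nonneg_mat N" and sch: "schur_stable N"
  shows "\<exists>lam. pos_vec lam \<and> neg_vec ((N - mat 1) *v lam)"
proof (rule ccontr)
  assume nex: "\<not> ?thesis"
  define one :: "real^'n" where "one = (\<chi> i. 1)"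
  define n where "n = real CARD('n)"
  have n1: "1 \<le> n" by (simp add: n_def)
  define S where "S = {x::real^'n. (\<forall>i. 0 \<le> x $ i) \<and> (\<Sum>i\<in>UNIV. x $ i) = 1}"
  define g where "g = (\<lambda>r x. one + r *\<^sub>R (N *v x))"
  define s where "s = (\<lambda>r x. \<Sum>i\<in>UNIV. g r x $ i)"
  define f where "f = (\<lambda>r x. (1 / s r x) *\<^sub>R g r x)"
  have Nx: "x \<in> S \<Longrightarrow> 0 \<le> (N *v x) $ i" for x i
    using nonneg_mv[OF N] by (auto simp: S_def nonneg_vec_def)
  have g1: "0 \<le> r \<Longrightarrow> x \<in> S \<Longrightarrow> 1 \<le> g r x $ i" for r x i
    using Nx[of x i] by (simp add: g_def one_def)
  have s_eq: "s r x = n + r * (\<Sum>i\<in>UNIV. (N *v x) $ i)" for r x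
    by (simp add: s_def g_def one_def sum.distrib sum_distrib_left n_def)
  have spos: "0 \<le> r \<Longrightarrow> x \<in> S \<Longrightarrow> n \<le> s r x" for r x
    unfolding s_eq using Nx by (simp add: sum_nonneg)
  have compS: "compact S"
  proof -
    have "norm x \<le> 1" if "x \<in> S" for x
    proof -
      have "norm x \<le> (\<Sum>i\<in>UNIV. \<bar>x $ i\<bar>)" by (rule norm_le_l1_cart)
      also have "\<dots> = (\<Sum>i\<in>UNIV. x $ i)" using that by (simp add: S_def)
      finally show ?thesis using that by (simp add: S_def)
    qed
    then have bS: "bounded S" by (auto simp: bounded_iff)
    have c1: "closed {x::real^'n. \<forall>i. 0 \<le> x $ i}"
      by (intro closed_Collect_all closed_Collect_le continuous_intros)
    have c2: "closed {x::real^'n. (\<Sum>i\<in>UNIV. x $ i) = 1}"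
      by (intro closed_Collect_eq continuous_intros)
    have "S = {x::real^'n. \<forall>i. 0 \<le> x $ i} \<inter> {x::real^'n. (\<Sum>i\<in>UNIV. x $ i) = 1}"
      by (auto simp: S_def)
    then have "closed S" using c1 c2 by auto
    then show ?thesis using bS compact_eq_bounded_closed by blast
  qed
  have convS: "convex S"
    unfolding convex_def S_def
    by (auto simp: sum.distrib sum_distrib_left[symmetric])
  have neS: "S \<noteq> {}"
  proof -
    have "(\<chi> i. 1 / n) \<in> S" by (auto simp: S_def n_def)
    then show ?thesis by auto
  qed
  have contN: "continuous_on UNIV (\<lambda>x. N *v x)"
    by (rule linear_continuous_on[OF bl_mv])
  have fix_r: "\<exists>x\<in>S. f r x = x" if r: "0 \<le> r" for r
  proof -
    have cg: "continuous_on S (g r)"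
      unfolding g_def by (intro continuous_intros continuous_on_subset[OF contN]) simp
    have cs: "continuous_on S (s r)"
      unfolding s_def by (intro continuous_intros continuous_on_compose2[OF _ cg]) auto
    have cf: "continuous_on S (f r)"
      unfolding f_def using spos[OF r] n1
      by (intro continuous_intros cs cg) (fastforce)
    have fim: "f r \<in> S \<rightarrow> S"
    proof
      fix x assume x: "x \<in> S"
      have sp: "0 < s r x" using spos[OF r x] n1 by simp
      have "0 \<le> f r x $ i" for i using g1[OF r x, of i] sp by (simp add: f_def)
      moreover have "(\<Sum>i\<in>UNIV. f r x $ i) = 1"
        using sp by (simp add: f_def s_def sum_divide_distrib[symmetric])
      ultimately show "f r x \<in> S" by (simp add: S_def)
    qed
    obtain x where "x \<in> S" "f r x = x" using brouwer[OF compS convS neS cf fim] by blast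
    then show ?thesis by blast
  qed
  define x where "x = (\<lambda>m::nat. SOME y. y \<in> S \<and> f (real m + 1) y = y)"
  have xS: "x m \<in> S" and xfix: "f (real m + 1) (x m) = x m" for m
  proof -
    have "\<exists>y. y \<in> S \<and> f (real m + 1) y = y" using fix_r[of "real m + 1"] by auto
    from someI_ex[OF this] show "x m \<in> S" "f (real m + 1) (x m) = x m" by (auto simp: x_def)
  qed
  define sg where "sg = (\<lambda>m. s (real m + 1) (x m) / (real m + 1))"
  have eqn: "N *v x m = sg m *\<^sub>R x m - (1 / (real m + 1)) *\<^sub>R one" for m
  proof -
    have sp: "0 < s (real m + 1) (x m)" using spos[of "real m + 1" "x m"] xS[of m] n1 by simp
    have "s (real m + 1) (x m) *\<^sub>R x m = s (real m + 1) (x m) *\<^sub>R f (real m + 1) (x m)"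
      using xfix[of m] by simp
    also have "\<dots> = g (real m + 1) (x m)" using sp by (simp add: f_def)
    finally have "s (real m + 1) (x m) *\<^sub>R x m = g (real m + 1) (x m)" .
    then have "s (real m + 1) (x m) *\<^sub>R x m = one + (real m + 1) *\<^sub>R (N *v x m)"
      by (simp add: g_def)
    then have "(real m + 1) *\<^sub>R (N *v x m) = s (real m + 1) (x m) *\<^sub>R x m - one" by simp
    then have "(1 / (real m + 1)) *\<^sub>R ((real m + 1) *\<^sub>R (N *v x m)) = (1 / (real m + 1)) *\<^sub>R (s (real m + 1) (x m) *\<^sub>R x m - one)"
      by simp
    then show ?thesis by (simp add: sg_def scaleR_diff_right divide_inverse_commute)
  qed
  have xpos: "0 < x m $ i" for m i
  proof -
    have sp: "0 < s (real m + 1) (x m)" using spos[of "real m + 1" "x m"] xS[of m] n1 by simp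
    have "x m $ i = (1 / s (real m + 1) (x m)) * g (real m + 1) (x m) $ i"
    proof -
      have "x m $ i = f (real m + 1) (x m) $ i" using xfix[of m] by simp
      then show ?thesis by (simp add: f_def)
    qed
    moreover have "1 \<le> g (real m + 1) (x m) $ i" using g1[of "real m + 1" "x m"] xS[of m] by simp
    ultimately show ?thesis using sp by simp
  qed
  have sg_gt: "1 < sg m" for m
  proof (rule ccontr)
    assume "\<not> 1 < sg m"
    then have le: "sg m \<le> 1" by simp
    have "pos_vec (x m)" using xpos by (simp add: pos_vec_def)
    moreover have "neg_vec ((N - mat 1) *v x m)"
      unfolding neg_vec_def
    proof
      fix i
      have "((N - mat 1) *v x m) $ i = (sg m - 1) * x m $ i - 1 / (real m + 1)"
      proof -
        have "(N - mat 1) *v x m = N *v x m - x m" by (simp add: matrix_vector_mult_diff_rdistrib)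
        also have "\<dots> = sg m *\<^sub>R x m - (1 / (real m + 1)) *\<^sub>R one - x m" by (simp only: eqn)
        finally show ?thesis by (simp add: one_def left_diff_distrib)
      qed
      moreover have "(sg m - 1) * x m $ i \<le> 0"
        using le xpos[of m i] by (simp add: mult_nonpos_nonneg)
      moreover have "0 < 1 / (real m + 1)" by simp
      ultimately show "((N - mat 1) *v x m) $ i < 0" by linarith
    qed
    ultimately show False using nex by blast
  qed
  obtain z h where zS: "z \<in> S" and h: "strict_mono (h :: nat \<Rightarrow> nat)" and lim: "(x \<circ> h) \<longlonglongrightarrow> z"
    using seq_compactE[OF compact_imp_seq_compact[OF compS], of x] xS by metis
  have sg_eq: "sg m = n / (real m + 1) + (\<Sum>i\<in>UNIV. (N *v x m) $ i)" for m
    by (simp add: sg_def s_eq add_divide_distrib)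
  have inv0: "(\<lambda>j. 1 / (real (h j) + 1)) \<longlonglongrightarrow> 0"
  proof -
    have "(\<lambda>m. 1 / (real m + 1)) \<longlonglongrightarrow> (0::real)"
      using LIMSEQ_inverse_real_of_nat by (simp add: inverse_eq_divide add.commute)
    from LIMSEQ_subseq_LIMSEQ[OF this h] show ?thesis by (simp add: o_def)
  qed
  have limN: "(\<lambda>j. N *v x (h j)) \<longlonglongrightarrow> N *v z"
    using bounded_linear.tendsto[OF bl_mv lim] by (simp add: o_def)
  have limsum: "(\<lambda>j. \<Sum>i\<in>UNIV. (N *v x (h j)) $ i) \<longlonglongrightarrow> (\<Sum>i\<in>UNIV. (N *v z) $ i)"
    by (intro tendsto_sum tendsto_vec_nth limN)
  define sz where "sz = (\<Sum>i\<in>UNIV. (N *v z) $ i)"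
  have limsg: "(\<lambda>j. sg (h j)) \<longlonglongrightarrow> sz"
  proof -
    have "(\<lambda>j. n * (1 / (real (h j) + 1)) + (\<Sum>i\<in>UNIV. (N *v x (h j)) $ i)) \<longlonglongrightarrow> n * 0 + sz"
      unfolding sz_def by (intro tendsto_intros inv0 limsum)
    then show ?thesis by (simp add: sg_eq)
  qed
  have sz1: "1 \<le> sz"
    using limsg by (rule tendsto_lowerbound) (simp_all add: less_imp_le sg_gt)
  have lim2: "(\<lambda>j. sg (h j) *\<^sub>R x (h j) - (1 / (real (h j) + 1)) *\<^sub>R one) \<longlonglongrightarrow> sz *\<^sub>R z - 0 *\<^sub>R one"
    using lim by (intro tendsto_intros limsg inv0) (simp add: o_def)
  have "N *v z = sz *\<^sub>R z"
    using LIMSEQ_unique[OF limN] lim2 by (simp add: eqn)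
  moreover have "z \<noteq> 0" using zS by (auto simp: S_def)
  ultimately have "\<bar>sz\<bar> < 1" using cmat_real_eig sch by blast
  then show False using sz1 by simp
qed

lemma bl_mv_left: "bounded_linear (\<lambda>X::real^'n::finite^'m::finite. X *v v)"
proof -
  have "linear (\<lambda>X::real^'n^'m. X *v v)"
    by (rule linearI) (simp_all add: matrix_vector_mult_add_rdistrib scaleR_matrix_vector_assoc)
  then show ?thesis by (simp add: linear_conv_bounded_linear)
qed

definition ZM :: "real^'n::finite^'n \<Rightarrow> bool" where
  "ZM M \<longleftrightarrow> (\<lambda>k. matpow M k) \<longlonglongrightarrow> 0"

lemma nonneg_mono_mv:
  assumes "nonneg_mat M" "\<And>j. u $ j \<le> w $ j"
  shows "(M *v u) $ i \<le> (M *v w) $ i"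
  unfolding mv_entry using assms
  by (intro sum_mono mult_left_mono) (auto simp: nonneg_mat_def)

lemma Z_of_col:
  fixes M :: "real^'n::finite^'n"
  assumes M: "nonneg_mat M" and lam: "pos_vec lam" and neg: "neg_vec ((M - mat 1) *v lam)"
  shows "ZM M"
proof -
  have lp: "0 < lam $ i" for i using lam by (simp add: pos_vec_def)
  define q where "q = (\<lambda>i. (M *v lam) $ i / lam $ i)"
  have lt: "(M *v lam) $ i < lam $ i" for i
  proof -
    have "((M - mat 1) *v lam) $ i < 0" using neg by (simp add: neg_vec_def)
    then show ?thesis by (simp add: matrix_vector_mult_diff_rdistrib)
  qed
  define r where "r = max 0 (Max (range q))"
  have q1: "q i < 1" for i using lt[of i] lp[of i] by (simp add: q_def divide_less_eq)
  have r0: "0 \<le> r" and r1: "r < 1" using q1 by (auto simp: r_def)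
  have Ml: "(M *v lam) $ i \<le> r * lam $ i" for i
  proof -
    have "q i \<le> r" unfolding r_def by (rule max.coboundedI2) simp
    then show ?thesis using lp[of i] by (simp add: q_def divide_le_eq)
  qed
  have pw: "(matpow M k *v lam) $ i \<le> r ^ k * lam $ i" for k i
  proof (induction k arbitrary: i)
    case 0 then show ?case by simp
  next
    case (Suc k)
    have "(matpow M (Suc k) *v lam) $ i = (M *v (matpow M k *v lam)) $ i"
      by (simp add: matrix_vector_mul_assoc)
    also have "\<dots> \<le> (M *v (r ^ k *\<^sub>R lam)) $ i"
      by (rule nonneg_mono_mv[OF M]) (simp add: Suc.IH)
    also have "\<dots> = r ^ k * (M *v lam) $ i"
      by (simp add: scaleR_matrix_vector_assoc[symmetric] matrix_vector_mult_scaleR)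
    also have "\<dots> \<le> r ^ k * (r * lam $ i)"
      using Ml[of i] r0 by (simp add: mult_left_mono)
    also have "r ^ k * (r * lam $ i) = r ^ Suc k * lam $ i" by simp
    finally show ?case .
  qed
  have ent: "\<bar>matpow M k $ i $ j\<bar> \<le> r ^ k * (lam $ i / lam $ j)" for k i j
  proof -
    have nn: "nonneg_mat (matpow M k)" by (rule matpow_nonneg[OF M])
    have t: "0 \<le> matpow M k $ i $ j' * lam $ j'" for j'
      using nn lp[of j'] unfolding nonneg_mat_def by simp
    have "matpow M k $ i $ j * lam $ j \<le> (\<Sum>j'\<in>UNIV. matpow M k $ i $ j' * lam $ j')"
      by (rule member_le_sum) (simp_all add: t)
    also have "\<dots> = (matpow M k *v lam) $ i" by (simp add: mv_entry)
    also have "\<dots> \<le> r ^ k * lam $ i" by (rule pw)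
    finally have "matpow M k $ i $ j * lam $ j \<le> r ^ k * lam $ i" .
    then have "matpow M k $ i $ j \<le> r ^ k * lam $ i / lam $ j"
      using lp[of j] by (simp only: pos_le_divide_eq)
    moreover have "0 \<le> matpow M k $ i $ j" using nn unfolding nonneg_mat_def by simp
    ultimately show ?thesis by simp
  qed
  show ?thesis unfolding ZM_def
  proof (rule vec_tendstoI)
    fix i
    show "((\<lambda>k. matpow M k $ i) \<longlongrightarrow> 0 $ i) sequentially"
    proof (rule vec_tendstoI)
      fix j
      have "norm r < 1" using r0 r1 by simp
      then have "(\<lambda>k. r ^ k) \<longlonglongrightarrow> 0" by (rule LIMSEQ_power_zero)
      then have lim: "(\<lambda>k. r ^ k * (lam $ i / lam $ j)) \<longlonglongrightarrow> 0"
        by (rule tendsto_mult_left_zero)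
      have ev: "\<forall>\<^sub>F k in sequentially. norm (matpow M k $ i $ j) \<le> r ^ k * (lam $ i / lam $ j)"
        using ent by (intro always_eventually) simp
      have "(\<lambda>k. matpow M k $ i $ j) \<longlonglongrightarrow> 0" by (rule Lim_null_comparison[OF ev lim])
      then show "((\<lambda>k. matpow M k $ i $ j) \<longlongrightarrow> 0 $ i $ j) sequentially" by simp
    qed
  qed
qed

lemma col_of_Z:
  fixes M :: "real^'n::finite^'n"
  assumes M: "nonneg_mat M" and Z: "ZM M"
  shows "\<exists>lam. pos_vec lam \<and> neg_vec ((M - mat 1) *v lam)"
proof -
  define one :: "real^'n" where "one = (\<chi> i. 1)"
  have "(\<lambda>k. matpow M k *v one) \<longlonglongrightarrow> 0 *v one"
    using Z unfolding ZM_def by (rule bounded_linear.tendsto[OF bl_mv_left])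
  then have "(\<lambda>k. matpow M k *v one) \<longlonglongrightarrow> 0" by simp
  then have "\<forall>i. ((\<lambda>k. (matpow M k *v one) $ i) \<longlongrightarrow> 0) sequentially"
    by (metis tendsto_vec_nth zero_index)
  then have "\<forall>i. eventually (\<lambda>k. (matpow M k *v one) $ i < 1) sequentially"
    by (auto intro: order_tendstoD)
  then have "eventually (\<lambda>k. \<forall>i. (matpow M k *v one) $ i < 1) sequentially"
    by (intro eventually_all_finite) auto
  then obtain K where K: "\<forall>i. (matpow M K *v one) $ i < 1"
    by (auto simp: eventually_sequentially)
  define lam where "lam = (\<Sum>k<K. matpow M k *v one)"
  have Kpos: "0 < K"
  proof (rule ccontr)
    assume "\<not> 0 < K"
    then have "K = 0" by simp
    then show False using K by (simp add: one_def)
  qed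
  have lam_i: "lam $ i = (\<Sum>k<K. (matpow M k *v one) $ i)" for i
    by (simp add: lam_def)
  have "1 \<le> lam $ i" for i
  proof -
    have "(matpow M 0 *v one) $ i \<le> (\<Sum>k<K. (matpow M k *v one) $ i)"
      using Kpos
      by (intro member_le_sum nonneg_mv matpow_nonneg M) (auto simp: one_def nonneg_vec_def)
    then show ?thesis by (simp add: lam_i one_def)
  qed
  then have pos: "pos_vec lam" by (auto simp: pos_vec_def intro: less_le_trans[of 0 1])
  have "(M - mat 1) *v lam = M *v lam - lam" by (simp add: matrix_vector_mult_diff_rdistrib)
  also have "M *v lam = (\<Sum>k<K. matpow M (Suc k) *v one)"
  proof -
    have "M *v (\<Sum>k<K'. matpow M k *v one) = (\<Sum>k<K'. M *v (matpow M k *v one))" for K'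
      by (induction K') (simp_all add: matrix_vector_right_distrib)
    then show ?thesis unfolding lam_def by (simp add: matrix_vector_mul_assoc)
  qed
  also have "(\<Sum>k<K. matpow M (Suc k) *v one) - lam = (\<Sum>k<K. matpow M (Suc k) *v one - matpow M k *v one)"
    unfolding lam_def by (simp add: sum_subtractf)
  also have "\<dots> = matpow M K *v one - one"
    by (subst sum_lessThan_telescope[where f = "\<lambda>k. matpow M k *v one"]) simp
  finally have "(M - mat 1) *v lam = matpow M K *v one - one" .
  then have "neg_vec ((M - mat 1) *v lam)" using K by (simp add: neg_vec_def one_def)
  then show ?thesis using pos by blast
qed

lemma ZM_transpose: "ZM (transpose M) \<longleftrightarrow> ZM M"
proof -
  have a: "ZM (transpose M)" if "ZM M" for M :: "real^'n::finite^'n"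
  proof -
    have "(\<lambda>k. transpose (matpow M k)) \<longlonglongrightarrow> transpose 0"
      using that unfolding ZM_def by (rule bounded_linear.tendsto[OF bounded_linear_transpose])
    moreover have "transpose (0::real^'n^'n) = 0" by (simp add: transpose_def vec_eq_iff)
    ultimately show ?thesis unfolding ZM_def matpow_transpose by simp
  qed
  show ?thesis using a[of M] a[of "transpose M"] by auto
qed

lemma row_col: "lam v* (M - mat 1) = (transpose M - mat 1) *v (lam::real^'n::finite)"
proof -
  have "lam v* (M - mat 1) = lam v* M - lam v* mat 1" by (rule vector_matrix_mult_diff_rdistrib)
  also have "\<dots> = lam v* M - lam" by simp
  also have "\<dots> = transpose M *v lam - mat 1 *v lam" by simp
  also have "\<dots> = (transpose M - mat 1) *v lam" by (rule matrix_vector_mult_diff_rdistrib[symmetric])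
  finally show ?thesis .
qed

lemma mv_uminus: "(- B) *v x = - (B *v (x::real^'n::finite))"
  by (simp add: matrix_vector_mult_def vec_eq_iff sum_negf)

lemma bb_mv: "bounded_bilinear (\<lambda>(B::real^'n::finite^'m::finite) v. B *v v)"
proof -
  have "bilinear (\<lambda>(B::real^'n^'m) v. B *v v)"
    unfolding bilinear_def
    using bl_mv_left bounded_linear.linear matrix_vector_mul_linear by blast
  then show ?thesis by (simp add: bilinear_conv_bounded_bilinear)
qed

lemma bb_vm: "bounded_bilinear (\<lambda>v (B::real^'n::finite^'m::finite). v v* B)"
proof -
  have l1: "linear (\<lambda>B::real^'n^'m. v v* B)" for v :: "real^'m"
    by (rule linearI) (simp_all add: vector_matrix_mult_add_rdistrib vector_scaleR_matrix_ac)
  have l2: "linear (\<lambda>v::real^'m. v v* B)" for B :: "real^'n^'m"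
    by (rule linearI) (simp_all add: vector_matrix_left_distrib scaleR_vector_matrix_assoc)
  have "bilinear (\<lambda>v (B::real^'n^'m). v v* B)"
    unfolding bilinear_def using l1 l2 by blast
  then show ?thesis by (simp add: bilinear_conv_bounded_bilinear)
qed

lemma mexp_deriv_shift:
  "((\<lambda>s. mexp ((s - c) *\<^sub>R A)) has_vector_derivative (mexp ((s - c) *\<^sub>R A) ** A)) (at s within X)"
proof -
  have d1: "((\<lambda>s. s - c) has_vector_derivative 1) (at s within X)"
    by (auto intro!: derivative_eq_intros)
  have "(((\<lambda>t. mexp (t *\<^sub>R A)) \<circ> (\<lambda>s. s - c)) has_vector_derivative (1 *\<^sub>R (mexp ((s - c) *\<^sub>R A) ** A))) (at s within X)"
    by (rule vector_diff_chain_within[OF d1 mexp_deriv])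
  then show ?thesis by (simp add: o_def)
qed

lemma mexp_deriv_rev:
  "((\<lambda>s. mexp ((c - s) *\<^sub>R A)) has_vector_derivative (- (mexp ((c - s) *\<^sub>R A) ** A))) (at s within X)"
proof -
  have d1: "((\<lambda>s. c - s) has_vector_derivative -1) (at s within X)"
    by (auto intro!: derivative_eq_intros)
  have "(((\<lambda>t. mexp (t *\<^sub>R A)) \<circ> (\<lambda>s. c - s)) has_vector_derivative ((-1) *\<^sub>R (mexp ((c - s) *\<^sub>R A) ** A))) (at s within X)"
    by (rule vector_diff_chain_within[OF d1 mexp_deriv])
  then show ?thesis by (simp add: o_def)
qed

lemma mexp_cont: "continuous (at s within X) (\<lambda>s. mexp ((s - c) *\<^sub>R A))"
  by (rule has_vector_derivative_continuous[OF mexp_deriv_shift])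
lemma mexp_cont_rev: "continuous (at s within X) (\<lambda>s. mexp ((c - s) *\<^sub>R A))"
  by (rule has_vector_derivative_continuous[OF mexp_deriv_rev])

lemma mexp_sol_deriv:
  "((\<lambda>s. mexp ((s - c) *\<^sub>R A) *v w) has_vector_derivative (A *v (mexp ((s - c) *\<^sub>R A) *v w))) (at s within X)"
proof -
  have "((\<lambda>s. mexp ((s - c) *\<^sub>R A) *v w) has_vector_derivative ((mexp ((s - c) *\<^sub>R A) ** A) *v w)) (at s within X)"
    by (rule bounded_linear.has_vector_derivative[OF bl_mv_left mexp_deriv_shift])
  then show ?thesis by (simp add: mexp_commute matrix_vector_mul_assoc)
qed

lemma ode_unique:
  fixes A :: "real^'n::finite^'n" and x :: "real \<Rightarrow> real^'n"
  assumes ab: "a < b" and cont: "continuous_on {a<..b} x"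
    and der: "\<forall>t\<in>{a<..<b}. (x has_vector_derivative (A *v x t)) (at t)"
    and lim: "(x \<longlongrightarrow> w) (at_right a)"
  shows "\<forall>t\<in>{a<..b}. x t = mexp ((t - a) *\<^sub>R A) *v w"
proof -
  define g where "g = (\<lambda>t. mexp ((a - t) *\<^sub>R A) *v x t)"
  have gd: "(g has_derivative (\<lambda>h. 0)) (at t within {a<..<b})" if t: "t \<in> {a<..<b}" for t
  proof -
    have "(g has_vector_derivative (mexp ((a - t) *\<^sub>R A) *v (A *v x t) + (- (mexp ((a - t) *\<^sub>R A) ** A)) *v x t)) (at t within {a<..<b})"
      unfolding g_def
      by (rule bounded_bilinear.has_vector_derivative[OF bb_mv mexp_deriv_rev])
         (rule has_vector_derivative_at_within[OF der[rule_format, OF t]])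
    then have "(g has_vector_derivative 0) (at t within {a<..<b})"
      by (simp add: matrix_vector_mul_assoc mv_uminus)
    then show ?thesis by (simp add: has_vector_derivative_def)
  qed
  obtain c where c: "\<forall>t\<in>{a<..<b}. g t = c"
    using has_derivative_zero_constant[of "{a<..<b}" g] gd by auto
  have glim: "(g \<longlongrightarrow> mexp ((a - a) *\<^sub>R A) *v w) (at_right a)"
  proof -
    have "((\<lambda>t. mexp ((a - t) *\<^sub>R A)) \<longlongrightarrow> mexp ((a - a) *\<^sub>R A)) (at_right a)"
      using mexp_cont_rev[of a "{a<..}" a A] by (simp add: continuous_within)
    then show ?thesis unfolding g_def
      by (rule bounded_bilinear.tendsto[OF bb_mv _ lim])
  qed
  then have glim': "(g \<longlongrightarrow> w) (at_right a)" by (simp add: mexp_zero)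
  have "eventually (\<lambda>t. g t = c) (at_right a)"
    unfolding eventually_at_right_field using ab c by (auto intro!: exI[of _ b])
  then have "(g \<longlongrightarrow> c) (at_right a)" by (simp add: tendsto_eventually)
  then have cw: "c = w" using glim' by (rule tendsto_unique[rotated]) simp
  have inner: "x t = mexp ((t - a) *\<^sub>R A) *v w" if t: "t \<in> {a<..<b}" for t
  proof -
    have "x t = (mexp ((t - a) *\<^sub>R A) ** mexp ((-(t - a)) *\<^sub>R A)) *v x t"
      by (simp only: mexp_inv matrix_vector_mul_lid)
    also have "\<dots> = mexp ((t - a) *\<^sub>R A) *v g t"
      by (simp add: g_def matrix_vector_mul_assoc)
    also have "\<dots> = mexp ((t - a) *\<^sub>R A) *v w" using c t cw by simp
    finally show ?thesis .
  qed
  have xb: "x b = mexp ((b - a) *\<^sub>R A) *v w"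
  proof -
    have filt: "at b within {a<..b} = at_left b"
      by (rule at_within_nhd[of _ "{a<..<b+1}"]) (use ab in auto)
    have "(x \<longlongrightarrow> x b) (at b within {a<..b})"
      using cont ab by (simp add: continuous_on_def)
    then have l1: "(x \<longlongrightarrow> x b) (at_left b)" using filt by simp
    have "((\<lambda>t. mexp ((t - a) *\<^sub>R A) *v w) \<longlongrightarrow> mexp ((b - a) *\<^sub>R A) *v w) (at_left b)"
    proof -
      have "((\<lambda>t. mexp ((t - a) *\<^sub>R A)) \<longlongrightarrow> mexp ((b - a) *\<^sub>R A)) (at_left b)"
        using mexp_cont[of b "{..<b}" a A] by (simp add: continuous_within)
      then show ?thesis by (rule bounded_linear.tendsto[OF bl_mv_left])
    qed
    moreover have "eventually (\<lambda>t. mexp ((t - a) *\<^sub>R A) *v w = x t) (at_left b)"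
      unfolding eventually_at_left_field using ab inner by (auto intro!: exI[of _ a])
    ultimately have "((\<lambda>t. x t) \<longlongrightarrow> mexp ((b - a) *\<^sub>R A) *v w) (at_left b)"
      by (rule Lim_transform_eventually)
    then show ?thesis using l1 tendsto_unique trivial_limit_at_left_real by metis
  qed
  show ?thesis
  proof
    fix t assume "t \<in> {a<..b}"
    then show "x t = mexp ((t - a) *\<^sub>R A) *v w"
      using inner[of t] xb by (cases "t = b") auto
  qed
qed

lemma ZM_L: "ZM X \<longleftrightarrow> (\<lambda>k. (L X) ^ k) \<longlonglongrightarrow> 0"
proof
  assume "ZM X"
  then have "(\<lambda>k. L (matpow X k)) \<longlonglongrightarrow> L 0"
    unfolding ZM_def by (rule bounded_linear.tendsto[OF bounded_linear_L])
  moreover have "L (0::real^'a^'a) = 0" using bounded_linear_L linear_simps(3) by blast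
  ultimately show "(\<lambda>k. (L X) ^ k) \<longlonglongrightarrow> 0" by (simp add: L_matpow)
next
  assume "(\<lambda>k. (L X) ^ k) \<longlonglongrightarrow> 0"
  then have "(\<lambda>k. mat_of ((L X) ^ k)) \<longlonglongrightarrow> mat_of 0"
    by (rule bounded_linear.tendsto[OF bounded_linear_mat_of])
  moreover have "mat_of (0::'a mx) = 0" using bounded_linear_mat_of linear_simps(3) by blast
  ultimately show "ZM X" unfolding ZM_def by (simp add: L_matpow[symmetric])
qed

lemma power_shift: "(X * Y) ^ Suc k = X * (Y * X) ^ k * (Y::'a::monoid_mult)"
  by (induction k) (simp_all add: mult.assoc power_commutes)

lemma Z_shift:
  fixes X Y :: "'a::real_normed_algebra_1"
  assumes "(\<lambda>k. (Y * X) ^ k) \<longlonglongrightarrow> 0"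
  shows "(\<lambda>k. (X * Y) ^ k) \<longlonglongrightarrow> 0"
proof -
  have "(\<lambda>k. X * (Y * X) ^ k * Y) \<longlonglongrightarrow> X * 0 * Y"
    by (intro tendsto_intros assms)
  then have "(\<lambda>k. (X * Y) ^ Suc k) \<longlonglongrightarrow> 0" by (simp only: power_shift) simp
  then show ?thesis by (rule LIMSEQ_imp_Suc)
qed

lemma ZM_swap: "ZM (X ** Y) \<longleftrightarrow> ZM (Y ** (X::real^'n::finite^'n))"
  unfolding ZM_L L_mult
  using Z_shift[of "L X" "L Y"] Z_shift[of "L Y" "L X"] by blast

lemma interval_idx:
  assumes T: "(0::real) < T" and t: "t0 < t"
  shows "\<exists>k. t0 + real k * T < t \<and> t \<le> t0 + real (Suc k) * T"
proof -
  define q where "q = (t - t0) / T"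
  have q0: "0 < q" using T t by (simp add: q_def)
  define c where "c = \<lceil>q\<rceil>"
  have c1: "1 \<le> c" using q0 by (simp add: c_def)
  have cq: "real_of_int c - 1 < q" "q \<le> real_of_int c"
    unfolding c_def by (simp_all add: ceiling_correct)
  define k where "k = nat c - 1"
  have kc: "real (Suc k) = real_of_int c" using c1 by (simp add: k_def)
  have "real k < q" using cq kc by simp
  then have "t0 + real k * T < t" using T by (simp add: q_def less_divide_eq algebra_simps)
  moreover have "q \<le> real (Suc k)" using cq kc by simp
  then have "t \<le> t0 + real (Suc k) * T" using T by (simp add: q_def divide_le_eq algebra_simps)
  ultimately show ?thesis by blast
qed

lemma sol_unpack:
  assumes "impulsive_solution A J T t0 x0 x"
  shows "x t0 = x0"
    "continuous_on {t0 + real k * T<..t0 + real (Suc k) * T} x"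
    "\<forall>t\<in>{t0 + real k * T<..<t0 + real (Suc k) * T}. (x has_vector_derivative (A *v x t)) (at t)"
    "(x \<longlongrightarrow> J *v x (t0 + real k * T)) (at_right (t0 + real k * T))"
  using assms unfolding impulsive_solution_def Let_def by blast+

lemma sol_formula:
  fixes A J :: "real^'n::finite^'n"
  assumes T: "0 < T" and sol: "impulsive_solution A J T t0 x0 x"
  shows "x (t0 + real k * T) = matpow (mexp (T *\<^sub>R A) ** J) k *v x0 \<and>
    (\<forall>t\<in>{t0 + real k * T<..t0 + real (Suc k) * T}.
       x t = mexp ((t - (t0 + real k * T)) *\<^sub>R A) *v (J *v (matpow (mexp (T *\<^sub>R A) ** J) k *v x0)))"
proof -
  define P where "P = mexp (T *\<^sub>R A) ** J"
  have ab: "t0 + real k * T < t0 + real (Suc k) * T" for k using T by simp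
  have form: "\<forall>t\<in>{t0 + real k * T<..t0 + real (Suc k) * T}.
       x t = mexp ((t - (t0 + real k * T)) *\<^sub>R A) *v (J *v x (t0 + real k * T))" for k
    by (rule ode_unique[OF ab sol_unpack(2,3,4)[OF sol]])
  have Q: "x (t0 + real k * T) = matpow P k *v x0" for k
  proof (induction k)
    case 0 then show ?case using sol_unpack(1)[OF sol] by simp
  next
    case (Suc k)
    have "t0 + real (Suc k) * T \<in> {t0 + real k * T<..t0 + real (Suc k) * T}" using ab by simp
    then have "x (t0 + real (Suc k) * T) = mexp ((t0 + real (Suc k) * T - (t0 + real k * T)) *\<^sub>R A) *v (J *v x (t0 + real k * T))"
      using form by blast
    also have "t0 + real (Suc k) * T - (t0 + real k * T) = T" by (simp add: algebra_simps)
    finally show ?case using Suc.IH by (simp add: P_def matrix_vector_mul_assoc matrix_mul_assoc)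
  qed
  show ?thesis using Q form unfolding P_def by simp
qed

lemma norm_mv_L: "norm (B *v v) \<le> norm (L B) * norm v"
  using norm_app[of "L B" v] by simp

lemma norm_L_mexp:
  assumes "0 \<le> s" "s \<le> T"
  shows "norm (L (mexp (s *\<^sub>R A))) \<le> exp (T * norm (L A))"
proof -
  have "norm (L (mexp (s *\<^sub>R A))) \<le> exp (norm (s *\<^sub>R L A))"
    unfolding L_mexp by (rule norm_exp)
  also have "\<dots> \<le> exp (T * norm (L A))"
    using assms by (simp add: mult_right_mono)
  finally show ?thesis .
qed

lemma gas_of_Z:
  fixes A J :: "real^'n::finite^'n"
  assumes T: "0 < T" and Z: "ZM (mexp (T *\<^sub>R A) ** J)"
  shows "gas_const_dwell A J T"
proof -
  define P where "P = mexp (T *\<^sub>R A) ** J"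
  define C where "C = exp (T * norm (L A)) * norm (L J)"
  have C0: "0 \<le> C" by (simp add: C_def)
  have LP: "(\<lambda>k. L (matpow P k)) \<longlonglongrightarrow> 0"
    using Z unfolding P_def ZM_L L_matpow .
  obtain B where B0: "0 < B" and B: "\<And>k. norm (L (matpow P k)) \<le> B"
    using convergent_imp_Bseq[of "\<lambda>k. L (matpow P k)"] LP BseqE unfolding convergent_def by metis
  have bound: "norm (x t) \<le> C * norm (L (matpow P k)) * norm x0"
    if sol: "impulsive_solution A J T t0 x0 x"
      and t: "t0 + real k * T < t" "t \<le> t0 + real (Suc k) * T" for t0 x0 x t k
  proof -
    have xt: "x t = mexp ((t - (t0 + real k * T)) *\<^sub>R A) *v (J *v (matpow P k *v x0))"
      using sol_formula[OF T sol, of k] t unfolding P_def by auto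
    have s: "0 \<le> t - (t0 + real k * T)" "t - (t0 + real k * T) \<le> T"
      using t by (simp_all add: algebra_simps)
    have "norm (x t) \<le> norm (L (mexp ((t - (t0 + real k * T)) *\<^sub>R A))) * norm (J *v (matpow P k *v x0))"
      unfolding xt by (rule norm_mv_L)
    also have "\<dots> \<le> exp (T * norm (L A)) * (norm (L J) * (norm (L (matpow P k)) * norm x0))"
    proof (rule mult_mono)
      show "norm (L (mexp ((t - (t0 + real k * T)) *\<^sub>R A))) \<le> exp (T * norm (L A))"
        by (rule norm_L_mexp[OF s])
      have "norm (J *v (matpow P k *v x0)) \<le> norm (L J) * norm (matpow P k *v x0)" by (rule norm_mv_L)
      also have "\<dots> \<le> norm (L J) * (norm (L (matpow P k)) * norm x0)"
        by (rule mult_left_mono[OF norm_mv_L]) simp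
      finally show "norm (J *v (matpow P k *v x0)) \<le> norm (L J) * (norm (L (matpow P k)) * norm x0)" .
    qed simp_all
    finally show ?thesis by (simp add: C_def mult_ac)
  qed
  show ?thesis unfolding gas_const_dwell_def
  proof (rule allI, rule conjI)
    fix t0
    show "\<forall>\<epsilon>>0. \<exists>\<delta>>0. \<forall>x0 x. impulsive_solution A J T t0 x0 x \<and> norm x0 < \<delta> \<longrightarrow> (\<forall>t\<ge>t0. norm (x t) < \<epsilon>)"
    proof (intro allI impI)
      fix \<epsilon> :: real assume e: "0 < \<epsilon>"
      define \<delta> where "\<delta> = \<epsilon> / (1 + C * B)"
      have CB: "0 \<le> C * B" using C0 B0 by simp
      have d0: "0 < \<delta>" using e CB by (simp add: \<delta>_def)
      have "\<forall>x0 x. impulsive_solution A J T t0 x0 x \<and> norm x0 < \<delta> \<longrightarrow> (\<forall>t\<ge>t0. norm (x t) < \<epsilon>)"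
      proof (intro allI impI)
        fix x0 x t assume H: "impulsive_solution A J T t0 x0 x \<and> norm x0 < \<delta>" and t: "t0 \<le> t"
        have nx: "(1 + C * B) * norm x0 < \<epsilon>"
          using H CB by (simp add: \<delta>_def less_divide_eq mult.commute)
        show "norm (x t) < \<epsilon>"
        proof (cases "t = t0")
          case True
          then show ?thesis using sol_unpack(1)[of A J T t0 x0 x] H nx CB
            by (smt (verit) mult_le_cancel_right1 norm_ge_zero)
        next
          case False
          then have "t0 < t" using t by simp
          then obtain k where k: "t0 + real k * T < t" "t \<le> t0 + real (Suc k) * T"
            using interval_idx[OF T] by blast
          have "norm (x t) \<le> C * norm (L (matpow P k)) * norm x0"
            using bound[OF _ k] H by blast
          also have "\<dots> \<le> C * B * norm x0"
            by (intro mult_right_mono mult_left_mono B C0) simp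
          also have "\<dots> \<le> (1 + C * B) * norm x0" by (simp add: mult_right_mono)
          finally show ?thesis using nx by simp
        qed
      qed
      with d0 show "\<exists>\<delta>'>0. \<forall>x0 x. impulsive_solution A J T t0 x0 x \<and> norm x0 < \<delta>' \<longrightarrow> (\<forall>t\<ge>t0. norm (x t) < \<epsilon>)"
        by blast
    qed
    show "\<forall>x0 x. impulsive_solution A J T t0 x0 x \<longrightarrow> (x \<longlongrightarrow> 0) at_top"
    proof (intro allI impI)
      fix x0 x assume sol: "impulsive_solution A J T t0 x0 x"
      show "(x \<longlongrightarrow> 0) at_top"
        unfolding tendsto_iff
      proof (intro allI impI)
        fix \<epsilon> :: real assume e: "0 < \<epsilon>"
        have "(\<lambda>k. C * norm (L (matpow P k)) * norm x0) \<longlonglongrightarrow> C * norm (0::'n mx) * norm x0"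
          by (intro tendsto_intros LP)
        then have "eventually (\<lambda>k. C * norm (L (matpow P k)) * norm x0 < \<epsilon>) sequentially"
          using e by (intro order_tendstoD) simp_all
        then obtain K where K: "\<And>k. K \<le> k \<Longrightarrow> C * norm (L (matpow P k)) * norm x0 < \<epsilon>"
          by (auto simp: eventually_sequentially)
        have "\<forall>t\<ge>t0 + real K * T + 1. dist (x t) 0 < \<epsilon>"
        proof (intro allI impI)
          fix t assume t: "t0 + real K * T + 1 \<le> t"
          then have "t0 < t" using T by (smt (verit) of_nat_0_le_iff mult_nonneg_nonneg)
          then obtain k where k: "t0 + real k * T < t" "t \<le> t0 + real (Suc k) * T"
            using interval_idx[OF T] by blast
          have "real K * T < real (Suc k) * T" using k t by simp
          then have "K < Suc k" using T by simp
          then have Kk: "K \<le> k" by simp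
          have "norm (x t) \<le> C * norm (L (matpow P k)) * norm x0"
            by (rule bound[OF sol k])
          then show "dist (x t) 0 < \<epsilon>" using K[OF Kk] by simp
        qed
        then show "eventually (\<lambda>t. dist (x t) 0 < \<epsilon>) at_top"
          unfolding eventually_at_top_linorder by blast
      qed
    qed
  qed
qed

lemma mv_axis: "((B::real^'n::finite^'m::finite) *v axis j 1) $ i = B $ i $ j"
proof -
  have "(B *v axis j 1) $ i = (\<Sum>j'\<in>UNIV. B $ i $ j' * (if j' = j then 1 else 0))"
    by (simp add: matrix_vector_mult_def axis_def)
  also have "\<dots> = B $ i $ j" by (simp add: if_distrib cong: if_cong)
  finally show ?thesis .
qed

lemma kf_eq:
  assumes T: "(0::real) < T" and t: "real k * T < t" "t \<le> real (Suc k) * T"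
  shows "nat \<lceil>t / T\<rceil> - 1 = k"
proof -
  have "\<lceil>t / T\<rceil> = int (Suc k)"
    unfolding ceiling_eq_iff using T t
    by (simp add: less_divide_eq divide_le_eq algebra_simps)
  then show ?thesis by simp
qed

lemma Z_of_gas:
  fixes A J :: "real^'n::finite^'n"
  assumes T: "0 < T" and G: "gas_const_dwell A J T"
  shows "ZM (mexp (T *\<^sub>R A) ** J)"
proof -
  define P where "P = mexp (T *\<^sub>R A) ** J"
  have conv: "(\<lambda>k. matpow P k *v x0) \<longlonglongrightarrow> 0" for x0
  proof -
    define F where "F = (\<lambda>k t. mexp ((t - real k * T) *\<^sub>R A) *v (J *v (matpow P k *v x0)))"
    define xs where "xs = (\<lambda>t. if t \<le> 0 then x0 else F (nat \<lceil>t / T\<rceil> - 1) t)"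
    have xsF: "xs t = F k t" if "real k * T < t" "t \<le> real (Suc k) * T" for k t
    proof -
      have "0 < t" using that T by (smt (verit) of_nat_0_le_iff mult_nonneg_nonneg)
      then show ?thesis using kf_eq[OF T that] by (simp add: xs_def)
    qed
    have xsk: "xs (real k * T) = matpow P k *v x0" for k
    proof (cases k)
      case 0 then show ?thesis by (simp add: xs_def)
    next
      case (Suc m)
      have "xs (real k * T) = F m (real k * T)"
        using xsF[of m "real k * T"] T Suc by simp
      also have "\<dots> = matpow P k *v x0"
        using Suc by (simp add: F_def algebra_simps P_def matrix_vector_mul_assoc matrix_mul_assoc)
      finally show ?thesis .
    qed
    have Fd: "(F k has_vector_derivative (A *v F k t)) (at t within X)" for k t X
      unfolding F_def by (rule mexp_sol_deriv)
    have Fc: "continuous_on X (F k)" for k X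
      by (rule continuous_at_imp_continuous_on)
         (auto intro: has_vector_derivative_continuous[OF Fd])
    have sol: "impulsive_solution A J T 0 x0 xs"
      unfolding impulsive_solution_def Let_def
    proof (rule conjI, simp add: xs_def, rule allI)
      fix k
      define a where "a = real k * T"
      define b where "b = real (Suc k) * T"
      have ab: "a < b" using T by (simp add: a_def b_def)
      have eq: "xs t = F k t" if "t \<in> {a<..b}" for t using xsF that by (simp add: a_def b_def)
      have c: "continuous_on {a<..b} xs"
        by (rule continuous_on_eq[OF Fc]) (simp add: eq)
      have d: "\<forall>t\<in>{a<..<b}. (xs has_vector_derivative (A *v xs t)) (at t)"
      proof
        fix t assume t: "t \<in> {a<..<b}"
        have "(xs has_vector_derivative (A *v F k t)) (at t)"
          by (rule has_vector_derivative_transform_within_open[OF Fd[of k t UNIV], of "{a<..<b}"])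
             (use t eq in auto)
        then show "(xs has_vector_derivative (A *v xs t)) (at t)" using eq t by simp
      qed
      have l: "(xs \<longlongrightarrow> J *v xs a) (at_right a)"
      proof -
        have "(F k \<longlongrightarrow> F k a) (at_right a)"
          using has_vector_derivative_continuous[OF Fd[of k a "{a<..}"]] by (simp add: continuous_within)
        moreover have "F k a = J *v xs a" using xsk[of k] by (simp add: F_def a_def mexp_zero)
        moreover have "eventually (\<lambda>t. F k t = xs t) (at_right a)"
          unfolding eventually_at_right_field using ab eq by (auto intro!: exI[of _ b])
        ultimately show ?thesis using Lim_transform_eventually by metis
      qed
      show "continuous_on {0 + real k * T<..0 + real (Suc k) * T} xs \<and>
         (\<forall>t\<in>{0 + real k * T<..<0 + real (Suc k) * T}. (xs has_vector_derivative A *v xs t) (at t)) \<and>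
         (xs \<longlongrightarrow> J *v xs (0 + real k * T)) (at_right (0 + real k * T))"
        using c d l by (simp add: a_def b_def)
    qed
    then have "(xs \<longlongrightarrow> 0) at_top" using G unfolding gas_const_dwell_def by blast
    moreover have "filterlim (\<lambda>k. real k * T) at_top sequentially"
      using T by (intro filterlim_at_top_mult_tendsto_pos[OF tendsto_const] filterlim_real_sequentially)
    ultimately have "((\<lambda>k. xs (real k * T)) \<longlongrightarrow> 0) sequentially"
      by (rule filterlim_compose)
    then show ?thesis by (simp add: xsk)
  qed
  show ?thesis unfolding ZM_def P_def[symmetric]
  proof (rule vec_tendstoI, rule vec_tendstoI)
    fix i j
    have "(\<lambda>k. (matpow P k *v axis j 1) $ i) \<longlonglongrightarrow> (0::real^'n) $ i"
      by (rule tendsto_vec_nth[OF conv])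
    then show "((\<lambda>k. matpow P k $ i $ j) \<longlongrightarrow> 0 $ i $ j) sequentially" by (simp add: mv_axis)
  qed
qed

lemma reflect_deriv:
  assumes "\<forall>\<tau>\<in>{0..T}. (z has_vector_derivative z' \<tau>) (at \<tau> within {0..T})"
  shows "\<forall>\<tau>\<in>{0..T}. ((\<lambda>\<tau>. z (T - \<tau>)) has_vector_derivative (- z' (T - \<tau>))) (at \<tau> within {0..(T::real)})"
proof
  fix \<tau> :: real assume t: "\<tau> \<in> {0..T}"
  have img: "(\<lambda>\<tau>. T - \<tau>) ` {0..T} = {0..T}"
  proof
    show "(\<lambda>\<tau>. T - \<tau>) ` {0..T} \<subseteq> {0..T}" by auto
    show "{0..T} \<subseteq> (\<lambda>\<tau>. T - \<tau>) ` {0..T}"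
    proof
      fix x assume "x \<in> {0..T}"
      then have "T - x \<in> {0..T}" "x = T - (T - x)" by auto
      then show "x \<in> (\<lambda>\<tau>. T - \<tau>) ` {0..T}" by blast
    qed
  qed
  have d1: "((\<lambda>\<tau>. T - \<tau>) has_vector_derivative -1) (at \<tau> within {0..T})"
    by (auto intro!: derivative_eq_intros)
  have d2: "(z has_vector_derivative z' (T - \<tau>)) (at (T - \<tau>) within (\<lambda>\<tau>. T - \<tau>) ` {0..T})"
    unfolding img using assms t by auto
  from vector_diff_chain_within[OF d1 d2]
  show "((\<lambda>\<tau>. z (T - \<tau>)) has_vector_derivative (- z' (T - \<tau>))) (at \<tau> within {0..T})"
    by (simp add: o_def)
qed

lemma e_iff_f:
  fixes A J :: "real^'n::finite^'n"
  shows "(\<exists>\<zeta> \<zeta>' \<epsilon>.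
          (\<forall>\<tau>\<in>{0..T}. (\<zeta> has_vector_derivative \<zeta>' \<tau>) (at \<tau> within {0..T})) \<and>
          pos_vec (\<zeta> T) \<and> \<epsilon> > (0::real) \<and>
          (\<forall>\<tau>\<in>{0..T}. nonpos_vec (\<zeta> \<tau> v* A - \<zeta>' \<tau>)) \<and>
          nonpos_vec (\<zeta> T v* J - \<zeta> 0 + \<epsilon> *\<^sub>R (\<chi> i. 1))) \<longleftrightarrow>
       (\<exists>\<xi> \<xi>' \<epsilon>.
          (\<forall>\<tau>\<in>{0..T}. (\<xi> has_vector_derivative \<xi>' \<tau>) (at \<tau> within {0..T})) \<and>
          pos_vec (\<xi> 0) \<and> \<epsilon> > (0::real) \<and>
          (\<forall>\<tau>\<in>{0..T}. nonpos_vec (\<xi> \<tau> v* A + \<xi>' \<tau>)) \<and>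
          nonpos_vec (\<xi> 0 v* J - \<xi> T + \<epsilon> *\<^sub>R (\<chi> i. 1)))"
proof
  assume "\<exists>\<zeta> \<zeta>' \<epsilon>. (\<forall>\<tau>\<in>{0..T}. (\<zeta> has_vector_derivative \<zeta>' \<tau>) (at \<tau> within {0..T})) \<and>
          pos_vec (\<zeta> T) \<and> \<epsilon> > (0::real) \<and>
          (\<forall>\<tau>\<in>{0..T}. nonpos_vec (\<zeta> \<tau> v* A - \<zeta>' \<tau>)) \<and>
          nonpos_vec (\<zeta> T v* J - \<zeta> 0 + \<epsilon> *\<^sub>R (\<chi> i. 1))"
  then obtain z z' e where d: "\<forall>\<tau>\<in>{0..T}. (z has_vector_derivative z' \<tau>) (at \<tau> within {0..T})"
    and p: "pos_vec (z T)" and e: "e > 0" and c: "\<forall>\<tau>\<in>{0..T}. nonpos_vec (z \<tau> v* A - z' \<tau>)"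
    and b: "nonpos_vec (z T v* J - z 0 + e *\<^sub>R (\<chi> i. 1))" by blast
  have c': "\<forall>\<tau>\<in>{0..T}. nonpos_vec (z (T - \<tau>) v* A + - z' (T - \<tau>))"
    using c by auto
  show "\<exists>\<xi> \<xi>' \<epsilon>. (\<forall>\<tau>\<in>{0..T}. (\<xi> has_vector_derivative \<xi>' \<tau>) (at \<tau> within {0..T})) \<and>
          pos_vec (\<xi> 0) \<and> \<epsilon> > (0::real) \<and>
          (\<forall>\<tau>\<in>{0..T}. nonpos_vec (\<xi> \<tau> v* A + \<xi>' \<tau>)) \<and>
          nonpos_vec (\<xi> 0 v* J - \<xi> T + \<epsilon> *\<^sub>R (\<chi> i. 1))"
    by (rule exI[of _ "\<lambda>\<tau>. z (T - \<tau>)"], rule exI[of _ "\<lambda>\<tau>. - z' (T - \<tau>)"], rule exI[of _ e])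
       (use reflect_deriv[OF d] p e c' b in simp)
next
  assume "\<exists>\<xi> \<xi>' \<epsilon>. (\<forall>\<tau>\<in>{0..T}. (\<xi> has_vector_derivative \<xi>' \<tau>) (at \<tau> within {0..T})) \<and>
          pos_vec (\<xi> 0) \<and> \<epsilon> > (0::real) \<and>
          (\<forall>\<tau>\<in>{0..T}. nonpos_vec (\<xi> \<tau> v* A + \<xi>' \<tau>)) \<and>
          nonpos_vec (\<xi> 0 v* J - \<xi> T + \<epsilon> *\<^sub>R (\<chi> i. 1))"
  then obtain z z' e where d: "\<forall>\<tau>\<in>{0..T}. (z has_vector_derivative z' \<tau>) (at \<tau> within {0..T})"
    and p: "pos_vec (z 0)" and e: "e > 0" and c: "\<forall>\<tau>\<in>{0..T}. nonpos_vec (z \<tau> v* A + z' \<tau>)"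
    and b: "nonpos_vec (z 0 v* J - z T + e *\<^sub>R (\<chi> i. 1))" by blast
  have c': "\<forall>\<tau>\<in>{0..T}. nonpos_vec (z (T - \<tau>) v* A - - z' (T - \<tau>))"
    using c by auto
  show "\<exists>\<zeta> \<zeta>' \<epsilon>. (\<forall>\<tau>\<in>{0..T}. (\<zeta> has_vector_derivative \<zeta>' \<tau>) (at \<tau> within {0..T})) \<and>
          pos_vec (\<zeta> T) \<and> \<epsilon> > (0::real) \<and>
          (\<forall>\<tau>\<in>{0..T}. nonpos_vec (\<zeta> \<tau> v* A - \<zeta>' \<tau>)) \<and>
          nonpos_vec (\<zeta> T v* J - \<zeta> 0 + \<epsilon> *\<^sub>R (\<chi> i. 1))"
    by (rule exI[of _ "\<lambda>\<tau>. z (T - \<tau>)"], rule exI[of _ "\<lambda>\<tau>. - z' (T - \<tau>)"], rule exI[of _ e])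
       (use reflect_deriv[OF d] p e c' b in simp)
qed

lemma vm_uminus: "x v* (- B) = - (x v* (B::real^'n::finite^'m::finite))"
  by (simp add: vector_matrix_mult_def vec_eq_iff sum_negf)

lemma vm_nonneg_mono:
  assumes "nonneg_mat E" "\<And>i. u $ i \<le> w $ i"
  shows "(u v* E) $ j \<le> (w v* E) $ j"
  unfolding vm_entry using assms
  by (intro sum_mono mult_right_mono) (auto simp: nonneg_mat_def)

lemma vm_nonneg:
  assumes "nonneg_mat E" "\<And>i. 0 \<le> w $ i"
  shows "0 \<le> (w v* E) $ j"
  unfolding vm_entry using assms
  by (intro sum_nonneg mult_nonneg_nonneg) (auto simp: nonneg_mat_def)

lemma colsum_pos:
  fixes A :: "real^'n::finite^'n"
  assumes A: "metzler A" and s: "0 \<le> s"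
  shows "0 < ((\<chi> i. 1) v* mexp (s *\<^sub>R A)) $ j"
proof -
  define E where "E = mexp (s *\<^sub>R A)"
  have nn: "nonneg_mat E" using metzler_mexp_nonneg[OF A s] by (simp add: E_def)
  have "E *v axis j 1 \<noteq> 0"
  proof
    assume h: "E *v axis j 1 = 0"
    have "axis j (1::real) = (mexp ((-s) *\<^sub>R A) ** E) *v axis j 1"
      using mexp_inv'[of s A] by (simp add: E_def)
    also have "\<dots> = 0" by (simp add: matrix_vector_mul_assoc[symmetric] h)
    finally show False by (simp add: axis_eq_0_iff)
  qed
  then obtain i where i: "(E *v axis j 1) $ i \<noteq> 0" by (metis vec_eq_iff zero_index)
  then have Ei: "0 < E $ i $ j" using nn by (simp add: mv_axis nonneg_mat_def order_le_neq_trans)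
  have "E $ i $ j \<le> (\<Sum>i'\<in>UNIV. E $ i' $ j)"
    by (rule member_le_sum) (use nn in \<open>auto simp: nonneg_mat_def\<close>)
  then show ?thesis using Ei by (simp add: vm_entry E_def)
qed

lemma e_to_c:
  fixes A J :: "real^'n::finite^'n"
  assumes A: "metzler A" and J: "nonneg_mat J" and T: "0 < T"
    and d: "\<forall>\<tau>\<in>{0..T}. (z has_vector_derivative z' \<tau>) (at \<tau> within {0..T})"
    and e: "0 < e" and c: "\<forall>\<tau>\<in>{0..T}. nonpos_vec (z \<tau> v* A - z' \<tau>)"
    and b: "nonpos_vec (z T v* J - z 0 + e *\<^sub>R (\<chi> i. 1))"
  shows "neg_vec (z T v* (J ** mexp (T *\<^sub>R A) - mat 1))"
proof -
  define E where "E = (\<lambda>\<tau>. mexp ((T - \<tau>) *\<^sub>R A))"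
  define D where "D = (\<lambda>\<tau>. (z' \<tau> - z \<tau> v* A) v* E \<tau>)"
  have phid: "((\<lambda>\<tau>. z \<tau> v* E \<tau>) has_vector_derivative D \<tau>) (at \<tau> within {0..T})"
    if t: "\<tau> \<in> {0..T}" for \<tau>
  proof -
    have "((\<lambda>\<tau>. z \<tau> v* E \<tau>) has_vector_derivative
          (z \<tau> v* (- (mexp ((T - \<tau>) *\<^sub>R A) ** A)) + z' \<tau> v* E \<tau>)) (at \<tau> within {0..T})"
      unfolding E_def
      by (rule bounded_bilinear.has_vector_derivative[OF bb_vm d[rule_format, OF t] mexp_deriv_rev])
    moreover have "z \<tau> v* (- (mexp ((T - \<tau>) *\<^sub>R A) ** A)) + z' \<tau> v* E \<tau> = D \<tau>"
      by (simp add: D_def E_def vm_uminus mexp_commute vector_matrix_mul_assoc[symmetric]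
          vector_matrix_mult_diff_distrib)
    ultimately show ?thesis by simp
  qed
  have Dnn: "0 \<le> D \<tau> $ j" if t: "\<tau> \<in> {0..T}" for \<tau> j
  proof -
    have "nonneg_mat (E \<tau>)" unfolding E_def using t by (intro metzler_mexp_nonneg A) simp
    moreover have "0 \<le> (z' \<tau> - z \<tau> v* A) $ i" for i
      using c t by (auto simp: nonpos_vec_def)
    ultimately show ?thesis unfolding D_def by (rule vm_nonneg)
  qed
  have mono: "(z 0 v* E 0) $ j \<le> (z T v* E T) $ j" for j
  proof -
    have dj: "((\<lambda>\<tau>. (z \<tau> v* E \<tau>) $ j) has_derivative (\<lambda>h. h *\<^sub>R D \<tau> $ j)) (at \<tau> within {0..T})"
      if "0 \<le> \<tau>" "\<tau> \<le> T" for \<tau>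
      using bounded_linear.has_vector_derivative[OF bounded_linear_vec_nth phid] that
      by (simp add: has_vector_derivative_def)
    obtain x where x: "x \<in> {0..T}" and eq: "(z T v* E T) $ j - (z 0 v* E 0) $ j = (T - 0) *\<^sub>R D x $ j"
      using mvt_very_simple[of 0 T "\<lambda>\<tau>. (z \<tau> v* E \<tau>) $ j" "\<lambda>\<tau> h. h *\<^sub>R D \<tau> $ j"] T dj
      by auto
    have "0 \<le> (T - 0) *\<^sub>R D x $ j" using T Dnn[OF x] by simp
    then show ?thesis using eq by simp
  qed
  define ET where "ET = mexp (T *\<^sub>R A)"
  have ET: "E 0 = ET" "E T = mat 1" by (simp_all add: E_def ET_def mexp_zero)
  have ETnn: "nonneg_mat ET" unfolding ET_def using T by (intro metzler_mexp_nonneg A) simp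
  define one :: "real^'n" where "one = (\<chi> i. 1)"
  have w0: "(z T v* J + e *\<^sub>R one) $ i \<le> z 0 $ i" for i
  proof -
    have "(z T v* J - z 0 + e *\<^sub>R one) $ i \<le> 0" using b unfolding nonpos_vec_def one_def by blast
    then show ?thesis by (simp add: one_def)
  qed
  show ?thesis unfolding neg_vec_def
  proof
    fix j
    have "((z T v* J + e *\<^sub>R one) v* ET) $ j \<le> (z 0 v* ET) $ j"
      by (rule vm_nonneg_mono[OF ETnn w0])
    also have "\<dots> \<le> z T $ j" using mono[of j] ET by simp
    finally have "((z T v* J + e *\<^sub>R one) v* ET) $ j \<le> z T $ j" .
    moreover have "((z T v* J + e *\<^sub>R one) v* ET) $ j = (z T v* (J ** ET)) $ j + e * (one v* ET) $ j"
      by (simp add: vector_matrix_left_distrib scaleR_vector_matrix_assoc vector_matrix_mul_assoc)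
    moreover have "0 < (one v* ET) $ j" unfolding one_def ET_def using T by (intro colsum_pos A) simp
    ultimately have "(z T v* (J ** ET)) $ j < z T $ j" using e
      by (smt (verit) mult_pos_pos)
    then show "(z T v* (J ** mexp (T *\<^sub>R A) - mat 1)) $ j < 0"
      by (simp add: ET_def vector_matrix_mult_diff_rdistrib)
  qed
qed

lemma c_to_e:
  fixes A J :: "real^'n::finite^'n"
  assumes A: "metzler A" and J: "nonneg_mat J" and T: "0 < T"
    and lam: "pos_vec lam" and neg: "neg_vec (lam v* (J ** mexp (T *\<^sub>R A) - mat 1))"
  shows "\<exists>\<zeta> \<zeta>' \<epsilon>.
          (\<forall>\<tau>\<in>{0..T}. (\<zeta> has_vector_derivative \<zeta>' \<tau>) (at \<tau> within {0..T})) \<and>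
          pos_vec (\<zeta> T) \<and> \<epsilon> > (0::real) \<and>
          (\<forall>\<tau>\<in>{0..T}. nonpos_vec (\<zeta> \<tau> v* A - \<zeta>' \<tau>)) \<and>
          nonpos_vec (\<zeta> T v* J - \<zeta> 0 + \<epsilon> *\<^sub>R (\<chi> i. 1))"
proof -
  define ET where "ET = mexp (T *\<^sub>R A)"
  define M where "M = J ** ET"
  define one :: "real^'n" where "one = (\<chi> i. 1)"
  define g where "g = (\<lambda>j. lam $ j - (lam v* M) $ j)"
  define h where "h = (\<lambda>j. (one v* ET) $ j)"
  have g0: "0 < g j" for j
  proof -
    have "(lam v* (M - mat 1)) $ j < 0" using neg by (simp add: neg_vec_def M_def ET_def)
    then show ?thesis by (simp add: g_def vector_matrix_mult_diff_rdistrib)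
  qed
  have h0: "0 < h j" for j unfolding h_def one_def ET_def using T by (intro colsum_pos A) simp
  define \<epsilon> where "\<epsilon> = Min (range (\<lambda>j. g j / (2 * (1 + h j))))"
  have e0: "0 < \<epsilon>" unfolding \<epsilon>_def using g0 h0 by (simp add: add_pos_pos)
  have ele: "\<epsilon> \<le> g j / (2 * (1 + h j))" for j unfolding \<epsilon>_def by (rule Min_le) auto
  define u where "u = lam v* J + \<epsilon> *\<^sub>R one"
  define d where "d = lam - u v* ET"
  have uET: "u v* ET = lam v* M + \<epsilon> *\<^sub>R (one v* ET)"
    by (simp add: u_def M_def vector_matrix_left_distrib scaleR_vector_matrix_assoc vector_matrix_mul_assoc)
  have dpos: "0 < d $ j" for j
  proof -
    have dj: "d $ j = g j - \<epsilon> * h j" by (simp add: d_def uET g_def h_def)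
    have "\<epsilon> * h j \<le> g j / (2 * (1 + h j)) * h j"
      using ele[of j] h0[of j] by (intro mult_right_mono) simp_all
    also have "\<dots> < g j"
    proof -
      have "g j * h j < g j * (2 * (1 + h j))" using g0[of j] h0[of j] by simp
      then show ?thesis using h0[of j] by (simp add: divide_less_eq mult.commute)
    qed
    finally show ?thesis using dj by simp
  qed
  define \<kappa> where "\<kappa> = (\<Sum>j\<in>UNIV. \<bar>(d v* A) $ j\<bar> / d $ j)"
  have kap: "(d v* A) $ j \<le> \<kappa> * d $ j" for j
  proof -
    have "\<bar>(d v* A) $ j\<bar> / d $ j \<le> \<kappa>"
      unfolding \<kappa>_def by (rule member_le_sum) (use dpos in \<open>auto intro: divide_nonneg_pos\<close>)
    then have "\<bar>(d v* A) $ j\<bar> \<le> \<kappa> * d $ j" using dpos[of j] by (simp add: divide_le_eq)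
    then show ?thesis by simp
  qed
  define z where "z = (\<lambda>\<tau>. u v* mexp (\<tau> *\<^sub>R A) + exp (\<kappa> * (\<tau> - T)) *\<^sub>R d)"
  define z' where "z' = (\<lambda>\<tau>. (u v* mexp (\<tau> *\<^sub>R A)) v* A + (exp (\<kappa> * (\<tau> - T)) * \<kappa>) *\<^sub>R d)"
  have zd: "(z has_vector_derivative z' \<tau>) (at \<tau> within {0..T})" for \<tau>
  proof -
    have d1: "((\<lambda>\<tau>. u v* mexp (\<tau> *\<^sub>R A)) has_vector_derivative (u v* (mexp (\<tau> *\<^sub>R A) ** A))) (at \<tau> within {0..T})"
      by (rule bounded_linear.has_vector_derivative[OF bounded_bilinear.bounded_linear_right[OF bb_vm] mexp_deriv])
    have r: "((\<lambda>\<tau>. exp (\<kappa> * (\<tau> - T))) has_real_derivative (exp (\<kappa> * (\<tau> - T)) * \<kappa>)) (at \<tau> within {0..T})"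
      by (auto intro!: derivative_eq_intros)
    have d2: "((\<lambda>\<tau>. exp (\<kappa> * (\<tau> - T)) *\<^sub>R d) has_vector_derivative
        (exp (\<kappa> * (\<tau> - T)) *\<^sub>R 0 + (exp (\<kappa> * (\<tau> - T)) * \<kappa>) *\<^sub>R d)) (at \<tau> within {0..T})"
      by (rule has_vector_derivative_scaleR[OF r has_vector_derivative_const])
    show ?thesis unfolding z_def z'_def
      using has_vector_derivative_add[OF d1 d2] by (simp add: vector_matrix_mul_assoc)
  qed
  have zT: "z T = lam"
  proof -
    have "z T = u v* ET + d" by (simp add: z_def ET_def)
    then show ?thesis by (simp add: d_def)
  qed
  have cond: "nonpos_vec (z \<tau> v* A - z' \<tau>)" for \<tau>
  proof -
    have "z \<tau> v* A - z' \<tau> = exp (\<kappa> * (\<tau> - T)) *\<^sub>R (d v* A - \<kappa> *\<^sub>R d)"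
      by (simp add: z_def z'_def vector_matrix_left_distrib scaleR_vector_matrix_assoc algebra_simps)
    moreover have "(d v* A - \<kappa> *\<^sub>R d) $ j \<le> 0" for j using kap[of j] by simp
    ultimately show ?thesis unfolding nonpos_vec_def by (simp add: mult_nonpos_nonneg mult_nonneg_nonpos)
  qed
  have bnd: "nonpos_vec (z T v* J - z 0 + \<epsilon> *\<^sub>R one)"
  proof -
    have "z T v* J - z 0 + \<epsilon> *\<^sub>R one = - (exp (\<kappa> * (0 - T)) *\<^sub>R d)"
    proof -
      have z0: "z 0 = u + exp (\<kappa> * (0 - T)) *\<^sub>R d" by (simp add: z_def mexp_zero)
      show ?thesis unfolding zT z0 by (simp add: u_def)
    qed
    then show ?thesis using dpos by (simp add: nonpos_vec_def less_imp_le)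
  qed
  show ?thesis
    by (rule exI[of _ z], rule exI[of _ z'], rule exI[of _ \<epsilon>])
       (use zd zT lam e0 cond bnd in \<open>simp add: one_def\<close>)
qed

lemma nonneg_mult: "nonneg_mat A \<Longrightarrow> nonneg_mat B \<Longrightarrow> nonneg_mat (A ** (B::real^'n::finite^'n))"
  by (auto simp: nonneg_mat_def matrix_matrix_mult_def intro!: sum_nonneg)

lemma nonneg_transpose: "nonneg_mat A \<Longrightarrow> nonneg_mat (transpose (A::real^'n::finite^'n))"
  by (simp add: nonneg_mat_def transpose_def)

lemma b_iff_c:
  fixes M :: "real^'n::finite^'n"
  shows "(\<exists>lam mu. pos_vec lam \<and> pos_vec mu \<and>
          (\<forall>x. nonneg_vec x \<longrightarrow> lam \<bullet> (M *v x) - lam \<bullet> x \<le> - (mu \<bullet> x))) \<longleftrightarrow>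
         (\<exists>lam. pos_vec lam \<and> neg_vec (lam v* (M - mat 1)))"
proof
  assume "\<exists>lam mu. pos_vec lam \<and> pos_vec mu \<and>
          (\<forall>x. nonneg_vec x \<longrightarrow> lam \<bullet> (M *v x) - lam \<bullet> x \<le> - (mu \<bullet> x))"
  then obtain lam mu where l: "pos_vec lam" and m: "pos_vec mu"
    and H: "\<forall>x. nonneg_vec x \<longrightarrow> lam \<bullet> (M *v x) - lam \<bullet> x \<le> - (mu \<bullet> x)" by blast
  have "(lam v* (M - mat 1)) $ j < 0" for j
  proof -
    have "nonneg_vec (axis j (1::real))" by (simp add: nonneg_vec_def axis_def)
    then have "lam \<bullet> (M *v axis j 1) - lam \<bullet> axis j 1 \<le> - (mu \<bullet> axis j 1)" using H by blast
    moreover have "lam \<bullet> (M *v axis j 1) = (lam v* M) $ j"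
      by (simp add: dot_lmul_matrix[symmetric] inner_axis)
    moreover have "0 < mu $ j" using m by (simp add: pos_vec_def)
    ultimately show ?thesis by (simp add: inner_axis vector_matrix_mult_diff_rdistrib)
  qed
  then show "\<exists>lam. pos_vec lam \<and> neg_vec (lam v* (M - mat 1))"
    using l by (auto simp: neg_vec_def)
next
  assume "\<exists>lam. pos_vec lam \<and> neg_vec (lam v* (M - mat 1))"
  then obtain lam where l: "pos_vec lam" and n: "neg_vec (lam v* (M - mat 1))" by blast
  define mu where "mu = - (lam v* (M - mat 1))"
  have "pos_vec mu" using n by (simp add: mu_def pos_vec_def neg_vec_def)
  moreover have "lam \<bullet> (M *v x) - lam \<bullet> x \<le> - (mu \<bullet> x)" for x
  proof -
    have "lam \<bullet> (M *v x) - lam \<bullet> x = (lam v* M) \<bullet> x - lam \<bullet> x" by (simp add: dot_lmul_matrix)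
    also have "\<dots> = (lam v* (M - mat 1)) \<bullet> x" by (simp add: vector_matrix_mult_diff_rdistrib inner_diff_left)
    finally show ?thesis by (simp add: mu_def)
  qed
  ultimately show "\<exists>lam mu. pos_vec lam \<and> pos_vec mu \<and>
          (\<forall>x. nonneg_vec x \<longrightarrow> lam \<bullet> (M *v x) - lam \<bullet> x \<le> - (mu \<bullet> x))"
    using l by blast
qed

theorem theorem2:
  fixes A J :: "real^'n^'n" and Tb :: real
  assumes "metzler A" and "nonneg_mat J" and "Tb > 0"
  defines "M \<equiv> J ** mexp (Tb *\<^sub>R A)"
  shows
   "(gas_const_dwell A J Tb \<longleftrightarrow>
       (\<exists>lam mu. pos_vec lam \<and> pos_vec mu \<and>
          (\<forall>x. nonneg_vec x \<longrightarrow> lam \<bullet> (M *v x) - lam \<bullet> x \<le> - (mu \<bullet> x)))) \<and>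
    (gas_const_dwell A J Tb \<longleftrightarrow>
       (\<exists>lam. pos_vec lam \<and> neg_vec (lam v* (M - mat 1)))) \<and>
    (gas_const_dwell A J Tb \<longleftrightarrow> schur_stable M) \<and>
    (gas_const_dwell A J Tb \<longleftrightarrow>
       (\<exists>lam. pos_vec lam \<and> neg_vec ((M - mat 1) *v lam))) \<and>
    (gas_const_dwell A J Tb \<longleftrightarrow>
       schur_stable (mexp (Tb *\<^sub>R transpose A) ** transpose J)) \<and>
    (gas_const_dwell A J Tb \<longleftrightarrow>
       (\<exists>\<zeta> \<zeta>' \<epsilon>.
          (\<forall>\<tau>\<in>{0..Tb}. (\<zeta> has_vector_derivative \<zeta>' \<tau>) (at \<tau> within {0..Tb})) \<and>
          pos_vec (\<zeta> Tb) \<and> \<epsilon> > (0::real) \<and>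
          (\<forall>\<tau>\<in>{0..Tb}. nonpos_vec (\<zeta> \<tau> v* A - \<zeta>' \<tau>)) \<and>
          nonpos_vec (\<zeta> Tb v* J - \<zeta> 0 + \<epsilon> *\<^sub>R (\<chi> i. 1)))) \<and>
    (gas_const_dwell A J Tb \<longleftrightarrow>
       (\<exists>\<xi> \<xi>' \<epsilon>.
          (\<forall>\<tau>\<in>{0..Tb}. (\<xi> has_vector_derivative \<xi>' \<tau>) (at \<tau> within {0..Tb})) \<and>
          pos_vec (\<xi> 0) \<and> \<epsilon> > (0::real) \<and>
          (\<forall>\<tau>\<in>{0..Tb}. nonpos_vec (\<xi> \<tau> v* A + \<xi>' \<tau>)) \<and>
          nonpos_vec (\<xi> 0 v* J - \<xi> Tb + \<epsilon> *\<^sub>R (\<chi> i. 1))))"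
proof -
  note A = assms(1) and J = assms(2) and T = assms(3)
  have Mnn: "nonneg_mat M" unfolding M_def
    using T by (intro nonneg_mult J metzler_mexp_nonneg A) simp
  have MTnn: "nonneg_mat (transpose M)" by (rule nonneg_transpose[OF Mnn])
  have gasZ: "gas_const_dwell A J Tb \<longleftrightarrow> ZM M"
    unfolding M_def using gas_of_Z[OF T] Z_of_gas[OF T] ZM_swap by blast
  have dZ: "(\<exists>lam. pos_vec lam \<and> neg_vec ((M - mat 1) *v lam)) \<longleftrightarrow> ZM M"
    using Z_of_col[OF Mnn] col_of_Z[OF Mnn] by blast
  have cZ: "(\<exists>lam. pos_vec lam \<and> neg_vec (lam v* (M - mat 1))) \<longleftrightarrow> ZM M"
    unfolding row_col
    using Z_of_col[OF MTnn] col_of_Z[OF MTnn] ZM_transpose[of M] by blast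
  have sZ: "schur_stable M \<longleftrightarrow> ZM M"
  proof
    assume "schur_stable M" then show "ZM M" using pf_col[OF Mnn] dZ by blast
  next
    assume "ZM M" then show "schur_stable M" using cZ schur_of_row[OF Mnn] by blast
  qed
  have MT: "mexp (Tb *\<^sub>R transpose A) ** transpose J = transpose M"
    unfolding M_def by (simp add: matrix_transpose_mul mexp_transpose[symmetric] transpose_scaleR')
  have sTZ: "schur_stable (transpose M) \<longleftrightarrow> ZM M"
  proof
    assume "schur_stable (transpose M)"
    then show "ZM M" using pf_col[OF MTnn] Z_of_col[OF MTnn] ZM_transpose[of M] by blast
  next
    assume "ZM M"
    then obtain lam where "pos_vec lam" "neg_vec ((M - mat 1) *v lam)" using dZ by blast
    moreover have "lam v* (transpose M - mat 1) = (M - mat 1) *v lam"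
      using row_col[of lam "transpose M"] by simp
    ultimately show "schur_stable (transpose M)" using schur_of_row[OF MTnn] by metis
  qed
  have eZ: "(\<exists>\<zeta> \<zeta>' \<epsilon>.
          (\<forall>\<tau>\<in>{0..Tb}. (\<zeta> has_vector_derivative \<zeta>' \<tau>) (at \<tau> within {0..Tb})) \<and>
          pos_vec (\<zeta> Tb) \<and> \<epsilon> > (0::real) \<and>
          (\<forall>\<tau>\<in>{0..Tb}. nonpos_vec (\<zeta> \<tau> v* A - \<zeta>' \<tau>)) \<and>
          nonpos_vec (\<zeta> Tb v* J - \<zeta> 0 + \<epsilon> *\<^sub>R (\<chi> i. 1))) \<longleftrightarrow> ZM M"
  proof
    assume "\<exists>\<zeta> \<zeta>' \<epsilon>.
          (\<forall>\<tau>\<in>{0..Tb}. (\<zeta> has_vector_derivative \<zeta>' \<tau>) (at \<tau> within {0..Tb})) \<and>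
          pos_vec (\<zeta> Tb) \<and> \<epsilon> > (0::real) \<and>
          (\<forall>\<tau>\<in>{0..Tb}. nonpos_vec (\<zeta> \<tau> v* A - \<zeta>' \<tau>)) \<and>
          nonpos_vec (\<zeta> Tb v* J - \<zeta> 0 + \<epsilon> *\<^sub>R (\<chi> i. 1))"
    then obtain z z' e where d: "\<forall>\<tau>\<in>{0..Tb}. (z has_vector_derivative z' \<tau>) (at \<tau> within {0..Tb})"
      and p: "pos_vec (z Tb)" and e: "e > 0" and c: "\<forall>\<tau>\<in>{0..Tb}. nonpos_vec (z \<tau> v* A - z' \<tau>)"
      and b: "nonpos_vec (z Tb v* J - z 0 + e *\<^sub>R (\<chi> i. 1))" by blast
    have "neg_vec (z Tb v* (M - mat 1))"
      unfolding M_def by (rule e_to_c[OF A J T d e c b])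
    then show "ZM M" using p cZ by blast
  next
    assume "ZM M"
    then obtain lam where "pos_vec lam" "neg_vec (lam v* (M - mat 1))" using cZ by blast
    then show "\<exists>\<zeta> \<zeta>' \<epsilon>.
          (\<forall>\<tau>\<in>{0..Tb}. (\<zeta> has_vector_derivative \<zeta>' \<tau>) (at \<tau> within {0..Tb})) \<and>
          pos_vec (\<zeta> Tb) \<and> \<epsilon> > (0::real) \<and>
          (\<forall>\<tau>\<in>{0..Tb}. nonpos_vec (\<zeta> \<tau> v* A - \<zeta>' \<tau>)) \<and>
          nonpos_vec (\<zeta> Tb v* J - \<zeta> 0 + \<epsilon> *\<^sub>R (\<chi> i. 1))"
      unfolding M_def by (rule c_to_e[OF A J T])
  qed
  show ?thesis
    using gasZ dZ cZ sZ sTZ MT eZ e_iff_f[of Tb A J] b_iff_c[of M] by simp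
qed

end
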